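(* Let $e[r]$ be an affine function of $r\in\mathbb{R}$ with $e[1]>0$ and $e[-1]>0$, and let $K$ and $U$ be as in the context. Then $K^\Lambda=K^{co}=\overline U$, where $K^{co}$ is the convex hull and $K^\Lambda$ the $\Lambda$-convex hull of $K$.
   Context: Let $n\ge2$, $\mathcal S_0^{n\times n}$ the trace-free symmetric matrices, $Z:=\mathbb{R}\times\mathbb{R}^n\times\mathbb{R}^n\times\mathcal S_0^{n\times n}\times\mathbb{R}$ with elements $z=(\rho,v,m,\sigma,p)$. $K:=\{z:\rho\in\{\pm1\},m=\rho v,v\otimes v-\sigma=e[\rho]\mathrm{Id}\}$. For $\rho\in(-1,1)$ let $M(z)=\frac{v\otimes v-\rho(m\otimes v+v\otimes m)+m\otimes m}{1-\rho^2}-\sigma$, $Q(z)=\lambda_{\max}(M(z))$ (maximal eigenvalue), $T_\pm(z)=\frac{|m\pm v|^2}{n(\rho\pm1)^2}$, and $U:=\{z:\rho\in(-1,1),T_\pm(z)<e[\pm1],Q(z)<e[\rho]\}$. Wave cone: $M_\Lambda(\bar z):=\begin{pmatrix}\bar\sigma+\bar p\,\mathrm{Id}&\bar v\\ \bar v^T&0\\ \bar m^T&\bar\rho\end{pmatrix}$, $\Lambda:=\{\bar z:\ker M_\Lambda(\bar z)\ne\{0\},(\bar\rho,\bar v)\ne0\}$. A function $h:Z\to\mathbb{R}$ is $\Lambda$-convex if $s\mapsto h(z+s\bar z)$ is convex for all $z\in Z$, $\bar z\in\Lambda$; the $\Lambda$-convex hull is $K^\Lambda:=\{z\in Z:h(z)\le\sup_Kh\text{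 for all }\Lambda\text{-convex }h:Z\to\mathbb{R}\}$. *)

theory Defs
  imports "HOL-Analysis.Analysis"
begin

type_synonym 'n zvec = "real \<times> (real^'n) \<times> (real^'n) \<times> (real^'n^'n) \<times> real"

definition outer :: "real^'n \<Rightarrow> real^'n \<Rightarrow> real^'n^'n" where
  "outer u w = (\<chi> i j. u$i * w$j)"

definition Zspace :: "('n::finite) zvec set" where
  "Zspace = {(\<rho>, v, m, \<sigma>, p). transpose \<sigma> = \<sigma> \<and> trace \<sigma> = 0}"

definition Kset :: "(real \<Rightarrow> real) \<Rightarrow> ('n::finite) zvec set" where
  "Kset e = {z \<in> Zspace. case z of (\<rho>, v, m, \<sigma>, p) \<Rightarrow>
      (\<rho> = 1 \<or> \<rho> = -1) \<and> m = \<rho> *\<^sub>R v \<and> outer v v - \<sigma> = e \<rho> *\<^sub>R mat 1}"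

definition Mmat :: "('n::finite) zvec \<Rightarrow> real^'n^'n" where
  "Mmat z = (case z of (\<rho>, v, m, \<sigma>, p) \<Rightarrow>
     (1 / (1 - \<rho>^2)) *\<^sub>R (outer v v - \<rho> *\<^sub>R (outer m v + outer v m) + outer m m) - \<sigma>)"

definition lambda_max :: "real^'n^'n \<Rightarrow> real" where
  "lambda_max A = Max {l. \<exists>x. x \<noteq> 0 \<and> A *v x = l *\<^sub>R x}"

definition Qfun :: "('n::finite) zvec \<Rightarrow> real" where
  "Qfun z = lambda_max (Mmat z)"

definition Tplus :: "('n::finite) zvec \<Rightarrow> real" where
  "Tplus z = (case z of (\<rho>, v, m, \<sigma>, p) \<Rightarrow>
     (norm (m + v))^2 / (real CARD('n) * (\<rho> + 1)^2))"

definition Tminus :: "('n::finite) zvec \<Rightarrow> real" where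
  "Tminus z = (case z of (\<rho>, v, m, \<sigma>, p) \<Rightarrow>
     (norm (m - v))^2 / (real CARD('n) * (\<rho> - 1)^2))"

definition Uset :: "(real \<Rightarrow> real) \<Rightarrow> ('n::finite) zvec set" where
  "Uset e = {z \<in> Zspace. -1 < fst z \<and> fst z < 1 \<and> Tplus z < e 1 \<and> Tminus z < e (-1)
      \<and> Qfun z < e (fst z)}"

text \<open>Wave cone: ker M_Lambda(zb) nontrivial, written out: there is (xi, tau) \<noteq> 0 with
  (sigma + p Id) xi + tau v = 0,  v . xi = 0,  m . xi + tau rho = 0; and (rho, v) \<noteq> 0.\<close>
definition wave_cone :: "('n::finite) zvec set" where
  "wave_cone = {zb \<in> Zspace. case zb of (\<rho>, v, m, \<sigma>, p) \<Rightarrow>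
      (\<exists>(\<xi>::real^'n) (\<tau>::real). (\<xi>, \<tau>) \<noteq> (0, 0) \<and>
          (\<sigma> + p *\<^sub>R mat 1) *v \<xi> + \<tau> *\<^sub>R v = 0 \<and> v \<bullet> \<xi> = 0 \<and> m \<bullet> \<xi> + \<tau> * \<rho> = 0)
      \<and> (\<rho>, v) \<noteq> (0, 0)}"

definition lambda_convex :: "(('n::finite) zvec \<Rightarrow> real) \<Rightarrow> bool" where
  "lambda_convex h \<longleftrightarrow> (\<forall>z\<in>Zspace. \<forall>zb\<in>wave_cone. convex_on UNIV (\<lambda>s::real. h (z + s *\<^sub>R zb)))"

definition lambda_hull :: "('n::finite) zvec set \<Rightarrow> ('n::finite) zvec set" where
  "lambda_hull K = {z \<in> Zspace. \<forall>h. lambda_convex h \<longrightarrow>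
      ereal (h z) \<le> (SUP k\<in>K. ereal (h k))}"

end

theory Submission
  imports Defs
begin


lemma outer_mv: "outer u w *v x = (w \<bullet> x) *\<^sub>R u"
  by (simp add: outer_def matrix_vector_mult_def vec_eq_iff inner_vec_def sum_distrib_left mult_ac)

lemma quad_outer: "x \<bullet> (outer u w *v x) = (u \<bullet> x) * (w \<bullet> x)"
  by (simp add: outer_mv inner_commute)

lemma transpose_outer: "transpose (outer u w) = outer w u"
  by (simp add: outer_def transpose_def vec_eq_iff)

lemma trace_outer: "trace (outer u w) = u \<bullet> w"
  by (simp add: outer_def trace_def inner_vec_def)

lemma outer_add_left: "outer (a + b) w = outer a w + outer b w"
  by (simp add: outer_def vec_eq_iff algebra_simps)
lemma outer_add_right: "outer w (a + b) = outer w a + outer w b"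
  by (simp add: outer_def vec_eq_iff algebra_simps)
lemma outer_diff_left: "outer (a - b) w = outer a w - outer b w"
  by (simp add: outer_def vec_eq_iff algebra_simps)
lemma outer_diff_right: "outer w (a - b) = outer w a - outer w b"
  by (simp add: outer_def vec_eq_iff algebra_simps)
lemma outer_scale_left: "outer (c *\<^sub>R a) w = c *\<^sub>R outer a w"
  by (simp add: outer_def vec_eq_iff algebra_simps)
lemma outer_scale_right: "outer w (c *\<^sub>R a) = c *\<^sub>R outer w a"
  by (simp add: outer_def vec_eq_iff algebra_simps)
lemma outer_minus_left: "outer (- a) w = - outer a w"
  by (simp add: outer_def vec_eq_iff algebra_simps)
lemma outer_minus_right: "outer w (- a) = - outer w a"
  by (simp add: outer_def vec_eq_iff algebra_simps)
lemma outer_zero [simp]: "outer 0 w = 0" "outer w 0 = 0"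
  by (simp_all add: outer_def vec_eq_iff)

lemmas outer_lin = outer_add_left outer_add_right outer_diff_left outer_diff_right
  outer_scale_left outer_scale_right outer_minus_left outer_minus_right

lemma transpose_add: "transpose (A + B) = transpose A + transpose (B::real^'n^'n)"
  by (simp add: transpose_def vec_eq_iff)
lemma transpose_diff: "transpose (A - B) = transpose A - transpose (B::real^'n^'n)"
  by (simp add: transpose_def vec_eq_iff)
lemma transpose_minus: "transpose (- A) = - transpose (A::real^'n^'n)"
  by (simp add: transpose_def vec_eq_iff)
lemma transpose_zero: "transpose (0::real^'n^'n) = 0"
  by (simp add: transpose_def vec_eq_iff)
lemma trace_scale: "trace (c *\<^sub>R (A::real^'n^'n)) = c * trace A"
  by (simp add: trace_def sum_distrib_left)
lemma trace_minus: "trace (- (A::real^'n^'n)) = - trace A"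
  by (simp add: trace_def sum_negf)
lemma trace_zero: "trace (0::real^'n^'n) = 0"
  by (simp add: trace_def)

lemma sym_form:
  assumes "transpose M = (M::real^'n^'n)"
  shows "x \<bullet> (M *v y) = y \<bullet> (M *v x)"
proof -
  have "x \<bullet> (M *v y) = (x v* M) \<bullet> y" by (simp add: dot_lmul_matrix)
  also have "x v* M = transpose M *v x" by simp
  finally show ?thesis using assms by (simp add: inner_commute)
qed

definition PS :: "(real^'n) list \<Rightarrow> real^'n^'n" where
  "PS gs = sum_list (map (\<lambda>g. outer g g) gs)"
definition SQ :: "(real^'n) list \<Rightarrow> real" where
  "SQ gs = sum_list (map (\<lambda>g. g \<bullet> g) gs)"

lemma PS_simps [simp]: "PS [] = 0" "PS (g # gs) = outer g g + PS gs"
  by (simp_all add: PS_def)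
lemma SQ_simps [simp]: "SQ [] = 0" "SQ (g # gs) = g \<bullet> g + SQ gs"
  by (simp_all add: SQ_def)

lemma trace_PS: "trace (PS gs) = SQ gs"
  by (induction gs) (simp_all add: trace_add trace_outer trace_zero)
lemma transpose_PS: "transpose (PS gs) = PS gs"
  by (induction gs) (simp_all add: transpose_add transpose_outer transpose_zero)
lemma SQ_nonneg: "SQ gs \<ge> 0"
  by (induction gs) simp_all
lemma quad_PS: "x \<bullet> (PS gs *v x) \<ge> 0"
  by (induction gs) (simp_all add: matrix_vector_mult_add_rdistrib inner_add_right quad_outer)
lemma PS_scale: "PS (map (\<lambda>g. c *\<^sub>R g) gs) = (c^2) *\<^sub>R PS gs"
  by (induction gs) (simp_all add: outer_lin power2_eq_square scaleR_add_right)
lemma SQ_scale: "SQ (map (\<lambda>g. c *\<^sub>R g) gs) = (c^2) * SQ gs"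
  by (induction gs) (simp_all add: power2_eq_square algebra_simps)



lemma quad_cont: "continuous_on S (\<lambda>x::real^'n. x \<bullet> (M *v x))"
  by (intro continuous_intros linear_continuous_on matrix_vector_mul_bounded_linear)

lemma eig_exists:
  fixes M :: "real^'n^'n" assumes sym: "transpose M = M"
  shows "\<exists>x c. x \<noteq> 0 \<and> M *v x = c *\<^sub>R x \<and> (\<forall>y. y \<bullet> (M *v y) \<le> c * (y \<bullet> y))"
proof -
  let ?f = "\<lambda>x::real^'n. x \<bullet> (M *v x)"
  obtain i :: 'n where True by auto
  have ne: "sphere (0::real^'n) 1 \<noteq> {}"
    using norm_axis_1[of i] by (metis dist_0_norm empty_iff mem_sphere)
  obtain x0 where x0: "x0 \<in> sphere 0 1" and mx: "\<forall>y\<in>sphere 0 1. ?f y \<le> ?f x0"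
    using continuous_attains_sup[OF compact_sphere ne quad_cont] by blast
  define c where "c = ?f x0"
  have nx0: "norm x0 = 1" using x0 by simp
  have x0x0: "x0 \<bullet> x0 = 1" using nx0 by (simp add: norm_eq_1)
  have bound: "?f y \<le> c * (y \<bullet> y)" for y
  proof (cases "y = 0")
    case True then show ?thesis by simp
  next
    case False
    let ?y = "(1 / norm y) *\<^sub>R y"
    have "?y \<in> sphere 0 1" using False by simp
    then have "?f ?y \<le> c" using mx c_def by blast
    moreover have "?f ?y = (1 / norm y)^2 * ?f y"
      by (simp add: matrix_vector_mult_scaleR power2_eq_square)
    moreover have "norm y > 0" using False by simp
    ultimately have "?f y \<le> c * (norm y)^2" by (simp add: field_simps)
    then show ?thesis by (simp add: dot_square_norm)
  qed
  define w where "w = M *v x0 - c *\<^sub>R x0"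
  have expand: "?f (x0 + s *\<^sub>R w) = c + 2 * s * (w \<bullet> (M *v x0)) + s^2 * ?f w" for s
  proof -
    have "?f (x0 + s *\<^sub>R w) = ?f x0 + s * (x0 \<bullet> (M *v w)) + s * (w \<bullet> (M *v x0)) + s^2 * ?f w"
    proof -
      have "M *v (x0 + s *\<^sub>R w) = M *v x0 + s *\<^sub>R (M *v w)"
        by (simp add: matrix_vector_right_distrib matrix_vector_mult_scaleR)
      then show ?thesis by (simp add: inner_add_left inner_add_right power2_eq_square distrib_left mult.assoc)
    qed
    then show ?thesis using sym_form[OF sym, of x0 w] c_def by simp
  qed
  have expand2: "(x0 + s *\<^sub>R w) \<bullet> (x0 + s *\<^sub>R w) = 1 + 2 * s * (w \<bullet> x0) + s^2 * (w \<bullet> w)" for s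
  proof -
    have "(x0 + s *\<^sub>R w) \<bullet> (x0 + s *\<^sub>R w) = x0 \<bullet> x0 + s * (x0 \<bullet> w) + s * (w \<bullet> x0) + s * (s * (w \<bullet> w))"
      by (simp add: inner_add_left inner_add_right distrib_left)
    also have "x0 \<bullet> w = w \<bullet> x0" by (rule inner_commute)
    finally show ?thesis using x0x0 by (simp add: power2_eq_square)
  qed
  have "M *v x0 = w + c *\<^sub>R x0" by (simp add: w_def)
  then have wM: "w \<bullet> (M *v x0) = c * (w \<bullet> x0) + w \<bullet> w"
    by (simp add: inner_add_right)
  define K where "K = ?f w - c * (w \<bullet> w)"
  have K: "K \<le> 0" using bound[of w] K_def by simp
  have ineq: "2 * s * (w \<bullet> w) + s^2 * K \<le> 0" for s
  proof -
    have "?f (x0 + s *\<^sub>R w) \<le> c * ((x0 + s *\<^sub>R w) \<bullet> (x0 + s *\<^sub>R w))" by (rule bound)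
    then show ?thesis unfolding expand expand2 wM K_def by (simp add: algebra_simps)
  qed
  have "w \<bullet> w = 0"
  proof (rule ccontr)
    assume "w \<bullet> w \<noteq> 0"
    then have d: "w \<bullet> w > 0" by (simp add: order_less_le)
    define s where "s = (w \<bullet> w) / (1 - K)"
    have s: "s > 0" using d K by (simp add: s_def)
    have "2 * s * (w \<bullet> w) + s^2 * K \<le> 0" by (rule ineq)
    then have "s * (2 * (w \<bullet> w) + s * K) \<le> 0" by (simp add: power2_eq_square algebra_simps)
    then have "2 * (w \<bullet> w) + s * K \<le> 0" using s by (simp add: mult_le_0_iff)
    moreover have "s * K \<ge> - (w \<bullet> w)"
    proof -
      have "s * K = (w \<bullet> w) * (K / (1 - K))" by (simp add: s_def)
      moreover have kk: "K / (1 - K) \<ge> -1" using K by (simp add: field_simps)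
      have "(w \<bullet> w) * (K / (1 - K)) \<ge> (w \<bullet> w) * (-1)"
        using mult_left_mono[OF kk, of "w \<bullet> w"] d by linarith
      ultimately show ?thesis by linarith
    qed
    ultimately show False using d by linarith
  qed
  then have "M *v x0 = c *\<^sub>R x0" by (simp add: w_def)
  moreover have "x0 \<noteq> 0" using nx0 by auto
  ultimately have "x0 \<noteq> 0 \<and> M *v x0 = c *\<^sub>R x0 \<and> (\<forall>y. y \<bullet> (M *v y) \<le> c * (y \<bullet> y))"
    using bound by blast
  then show ?thesis by blast
qed

definition eigs :: "real^'n^'n \<Rightarrow> real set" where
  "eigs A = {l. \<exists>x. x \<noteq> 0 \<and> A *v x = l *\<^sub>R x}"

lemma eigs_finite:
  fixes M :: "real^'n^'n" assumes sym: "transpose M = M"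
  shows "finite (eigs M)"
proof -
  define ev where "ev l = (SOME x. x \<noteq> 0 \<and> M *v x = l *\<^sub>R x)" for l
  have ev: "ev l \<noteq> 0 \<and> M *v ev l = l *\<^sub>R ev l" if "l \<in> eigs M" for l
    using that unfolding eigs_def ev_def by (metis (mono_tags, lifting) mem_Collect_eq someI_ex)
  have inj: "inj_on ev (eigs M)"
  proof (rule inj_onI)
    fix l l' assume l: "l \<in> eigs M" and l': "l' \<in> eigs M" and e: "ev l = ev l'"
    have a: "M *v ev l = l *\<^sub>R ev l" "ev l \<noteq> 0" using ev[OF l] by auto
    have b: "M *v ev l = l' *\<^sub>R ev l" using ev[OF l'] e by simp
    have "l *\<^sub>R ev l = l' *\<^sub>R ev l" using a b by simp
    then show "l = l'" using a(2) by (simp add: scaleR_cancel_right)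
  qed
  have orth: "pairwise orthogonal (ev ` eigs M)"
  proof (clarsimp simp: pairwise_def orthogonal_def)
    fix l l' assume l: "l \<in> eigs M" and l': "l' \<in> eigs M" and ne: "ev l \<noteq> ev l'"
    have "l \<noteq> l'" using ne by auto
    have "ev l \<bullet> (M *v ev l') = ev l' \<bullet> (M *v ev l)" by (rule sym_form[OF sym])
    then have "l' * (ev l \<bullet> ev l') = l * (ev l \<bullet> ev l')" using ev[OF l] ev[OF l']
      by (simp add: inner_commute)
    then show "ev l \<bullet> ev l' = 0" using \<open>l \<noteq> l'\<close> by simp
  qed
  have "0 \<notin> ev ` eigs M" using ev by auto
  then have "independent (ev ` eigs M)" by (rule pairwise_orthogonal_independent[OF orth])
  then have "finite (ev ` eigs M)" by (rule independent_bound_general[THEN conjunct1])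
  then show ?thesis by (rule finite_imageD[OF _ inj])
qed

lemma lambda_max_props:
  fixes M :: "real^'n^'n" assumes sym: "transpose M = M"
  shows "lambda_max M \<in> eigs M" and "\<And>y. y \<bullet> (M *v y) \<le> lambda_max M * (y \<bullet> y)"
proof -
  obtain x c where xc: "x \<noteq> 0 \<and> M *v x = c *\<^sub>R x \<and> (\<forall>y. y \<bullet> (M *v y) \<le> c * (y \<bullet> y))"
    using eig_exists[OF sym] by (elim exE) (rule that)
  have x: "x \<noteq> 0" "M *v x = c *\<^sub>R x" using xc by simp_all
  have b: "\<And>y. y \<bullet> (M *v y) \<le> c * (y \<bullet> y)" using xc by blast
  have ce: "c \<in> eigs M" unfolding eigs_def using x by (intro CollectI exI[of _ x]) simp
  have le: "l \<le> c" if lin: "l \<in> eigs M" for l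
  proof -
    obtain y where y: "y \<noteq> 0" "M *v y = l *\<^sub>R y" using lin unfolding eigs_def by blast
    have "y \<bullet> (M *v y) = l * (y \<bullet> y)" using y(2) by simp
    then have "l * (y \<bullet> y) \<le> c * (y \<bullet> y)" using b[of y] by linarith
    moreover have "y \<bullet> y > 0" using y by simp
    ultimately show ?thesis by (rule mult_right_le_imp_le)
  qed
  have "Max (eigs M) = c"
    by (rule Max_eqI[OF eigs_finite[OF sym] le ce])
  then have lm: "lambda_max M = c" unfolding lambda_max_def eigs_def .
  show "lambda_max M \<in> eigs M" unfolding lm by (rule ce)
  show "\<And>y. y \<bullet> (M *v y) \<le> lambda_max M * (y \<bullet> y)" unfolding lm by (rule b)
qed

lemma lambda_max_less:
  fixes M :: "real^'n^'n" assumes sym: "transpose M = M"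
    and lt: "\<And>x. x \<noteq> 0 \<Longrightarrow> x \<bullet> (M *v x) < c * (x \<bullet> x)"
  shows "lambda_max M < c"
proof -
  obtain x where x: "x \<noteq> 0" "M *v x = lambda_max M *\<^sub>R x"
    using lambda_max_props(1)[OF sym] unfolding eigs_def by auto
  have "x \<bullet> (M *v x) = lambda_max M * (x \<bullet> x)" using x(2) by simp
  then have "lambda_max M * (x \<bullet> x) < c * (x \<bullet> x)" using lt[OF x(1)] by linarith
  moreover have "x \<bullet> x > 0" using x by simp
  ultimately show ?thesis using mult_right_less_imp_less[of "lambda_max M" "x \<bullet> x" c] by linarith
qed



definition kerm :: "real^'n^'n \<Rightarrow> (real^'n) set" where
  "kerm P = {y. P *v y = 0}"

lemma subspace_kerm: "subspace (kerm P)"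
  unfolding subspace_def kerm_def
  by (simp add: matrix_vector_right_distrib matrix_vector_mult_scaleR)

lemma dim_UNIV_cart: "dim (UNIV :: (real^'n) set) = CARD('n)"
  by simp

lemma kerm_UNIV_zero:
  fixes P :: "real^'n^'n"
  assumes "kerm P = UNIV" shows "P = 0"
proof -
  have "\<forall>x::real^'n. P *v x = (0::real^'n^'n) *v x" using assms unfolding kerm_def by auto
  then show ?thesis using matrix_eq by blast
qed

lemma polar_zero:
  fixes P :: "real^'n^'n"
  assumes sym: "transpose P = P" and z: "\<And>y. y \<bullet> (P *v y) = 0"
  shows "P = 0"
proof -
  have "P *v x = 0" for x
  proof -
    let ?w = "P *v x"
    have "(x + ?w) \<bullet> (P *v (x + ?w)) = x \<bullet> (P *v x) + x \<bullet> (P *v ?w) + ?w \<bullet> (P *v x) + ?w \<bullet> (P *v ?w)"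
      by (simp add: matrix_vector_right_distrib inner_add_left inner_add_right)
    moreover have "x \<bullet> (P *v ?w) = ?w \<bullet> (P *v x)" by (rule sym_form[OF sym])
    ultimately have "2 * (?w \<bullet> ?w) = 0" using z[of "x + ?w"] z[of x] z[of ?w] by simp
    then show ?thesis by simp
  qed
  then have "kerm P = UNIV" unfolding kerm_def by auto
  then show ?thesis by (rule kerm_UNIV_zero)
qed

lemma psd_decomp_aux:
  "\<forall>P::real^'n^'n. transpose P = P \<longrightarrow> (\<forall>y. 0 \<le> y \<bullet> (P *v y)) \<longrightarrow>
     CARD('n) \<le> dim (kerm P) + N \<longrightarrow> (\<exists>gs. P = PS gs)"
proof (induction N)
  case 0
  show ?case
  proof (intro allI impI)
    fix P :: "real^'n^'n"
    assume "CARD('n) \<le> dim (kerm P) + 0"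
    then have "\<not> dim (kerm P) < dim (UNIV :: (real^'n) set)" by simp
    then have "\<not> span (kerm P) \<subset> span UNIV" using dim_psubset by blast
    moreover have "span (kerm P) = kerm P" using subspace_kerm[of P] span_eq_iff by blast
    ultimately have "kerm P = UNIV" by (metis span_UNIV subset_UNIV psubsetI)
    then have "P = 0" by (rule kerm_UNIV_zero)
    then show "\<exists>gs. P = PS gs" by (intro exI[of _ "[]"]) simp
  qed
next
  case (Suc N)
  show ?case
  proof (intro allI impI)
    fix P :: "real^'n^'n"
    assume sym: "transpose P = P" and psd: "\<forall>y. 0 \<le> y \<bullet> (P *v y)"
      and dimP: "CARD('n) \<le> dim (kerm P) + Suc N"
    show "\<exists>gs. P = PS gs"
    proof (cases "P = 0")
      case True then show ?thesis by (intro exI[of _ "[]"]) simp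
    next
      case False
      obtain x c where xc: "x \<noteq> 0 \<and> P *v x = c *\<^sub>R x \<and> (\<forall>y. y \<bullet> (P *v y) \<le> c * (y \<bullet> y))"
        using eig_exists[OF sym] by (elim exE) (rule that)
      have x0: "x \<noteq> 0" and Px: "P *v x = c *\<^sub>R x" and bd: "\<And>y. y \<bullet> (P *v y) \<le> c * (y \<bullet> y)"
        using xc by blast+
      have xx: "x \<bullet> x > 0" using x0 by simp
      have cpos: "c > 0"
      proof (rule ccontr)
        assume "\<not> c > 0"
        then have "y \<bullet> (P *v y) = 0" for y
          using bd[of y] psd mult_nonpos_nonneg[of c "y \<bullet> y"] by (smt (verit) inner_ge_zero)
        then have "P = 0" by (rule polar_zero[OF sym])
        then show False using False by simp
      qed
      define k where "k = sqrt (c / (x \<bullet> x))"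
      have k2: "k * k = c / (x \<bullet> x)" using cpos xx by (simp add: k_def)
      define g where "g = k *\<^sub>R x"
      define P' where "P' = P - outer g g"
      have symP': "transpose P' = P'"
        by (simp add: P'_def transpose_diff transpose_outer sym)
      have P'y: "P' *v y = P *v y - (k * k * (x \<bullet> y)) *\<^sub>R x" for y
        by (simp add: P'_def g_def matrix_vector_mult_diff_rdistrib outer_mv)
      have psdP': "\<forall>y. 0 \<le> y \<bullet> (P' *v y)"
      proof
        fix y
        define a where "a = (x \<bullet> y) / (x \<bullet> x)"
        define y' where "y' = y - a *\<^sub>R x"
        have "0 \<le> y' \<bullet> (P *v y')" using psd by blast
        also have "y' \<bullet> (P *v y') = y \<bullet> (P *v y) - 2 * a * c * (x \<bullet> y) + a * a * c * (x \<bullet> x)"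
        proof -
          have "P *v y' = P *v y - (a * c) *\<^sub>R x"
            by (simp add: y'_def matrix_vector_mult_diff_distrib matrix_vector_mult_scaleR Px)
          moreover have "x \<bullet> (P *v y) = c * (x \<bullet> y)"
            using sym_form[OF sym, of x y] Px by (simp add: inner_commute)
          ultimately show ?thesis
            by (simp add: y'_def inner_diff_left inner_diff_right algebra_simps inner_commute[of y x] Px)
        qed
        also have "\<dots> = y \<bullet> (P' *v y)"
          using xx by (simp add: P'y inner_diff_right a_def k2 field_simps inner_commute[of y x] power2_eq_square)
        finally show "0 \<le> y \<bullet> (P' *v y)" .
      qed
      have sub: "kerm P \<subseteq> kerm P'"
      proof
        fix y assume "y \<in> kerm P"
        then have Py: "P *v y = 0" by (simp add: kerm_def)
        have "x \<bullet> (P *v y) = y \<bullet> (P *v x)" by (rule sym_form[OF sym])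
        then have "c * (x \<bullet> y) = 0" using Py Px by (simp add: inner_commute)
        then have "x \<bullet> y = 0" using cpos by simp
        then show "y \<in> kerm P'" using Py by (simp add: kerm_def P'y)
      qed
      have xin: "x \<in> kerm P'" using xx k2
        by (simp add: kerm_def P'y Px)
      have xnot: "x \<notin> kerm P" using cpos x0 by (simp add: kerm_def Px)
      have "span (kerm P) \<subset> span (kerm P')"
      proof -
        have e1: "span (kerm P) = kerm P" and e2: "span (kerm P') = kerm P'"
          using subspace_kerm by (simp_all only: span_eq_iff)
        show ?thesis unfolding e1 e2 using sub xin xnot by blast
      qed
      then have "dim (kerm P) < dim (kerm P')" by (rule dim_psubset)
      then have "CARD('n) \<le> dim (kerm P') + N" using dimP by simp
      then obtain gs where "P' = PS gs" using Suc.IH symP' psdP' by blast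
      then have "P = PS (g # gs)" by (simp add: P'_def algebra_simps)
      then show ?thesis by blast
    qed
  qed
qed

lemma psd_decomp:
  fixes P :: "real^'n^'n"
  assumes "transpose P = P" "\<And>y. 0 \<le> y \<bullet> (P *v y)"
  shows "\<exists>gs. P = PS gs"
  using psd_decomp_aux[of "CARD('n)"] assms by auto



definition Zp :: "(real \<Rightarrow> real) \<Rightarrow> real^'n \<Rightarrow> (real^'n) list \<Rightarrow> real \<Rightarrow> ('n::finite) zvec" where
  "Zp e A gs p = (1, A, A, outer A A + PS gs - e 1 *\<^sub>R mat 1, p)"
definition Zm :: "(real \<Rightarrow> real) \<Rightarrow> real^'n \<Rightarrow> (real^'n) list \<Rightarrow> real \<Rightarrow> ('n::finite) zvec" where
  "Zm e B gs p = (-1, B, -B, outer B B + PS gs - e (-1) *\<^sub>R mat 1, p)"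

lemma Zspace_iff [simp]: "((r, v, m, s, p) \<in> Zspace) \<longleftrightarrow> transpose s = s \<and> trace s = 0"
  by (simp add: Zspace_def)

lemma Zspace_lin:
  assumes "z \<in> Zspace" "w \<in> Zspace"
  shows "a *\<^sub>R z + b *\<^sub>R w \<in> Zspace"
  using assms
  by (cases z, cases w) (simp add: transpose_add transpose_scalar trace_add trace_scale)

lemma Zspace_diff:
  assumes "z \<in> Zspace" "w \<in> Zspace"
  shows "z - w \<in> Zspace"
  using assms
  by (cases z, cases w) (simp add: transpose_diff trace_sub)

lemma Zp_Zspace: "A \<bullet> A + SQ gs = real CARD('n) * e 1 \<Longrightarrow> Zp e A gs p \<in> (Zspace :: ('n::finite) zvec set)"
  by (simp add: Zp_def transpose_add transpose_diff transpose_outer transpose_PS transpose_scalar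
      trace_add trace_sub trace_outer trace_PS trace_scale trace_I)

lemma Zm_Zspace: "B \<bullet> B + SQ gs = real CARD('n) * e (-1) \<Longrightarrow> Zm e B gs p \<in> (Zspace :: ('n::finite) zvec set)"
  by (simp add: Zm_def transpose_add transpose_diff transpose_outer transpose_PS transpose_scalar
      trace_add trace_sub trace_outer trace_PS trace_scale trace_I)

lemma Zp_K: "A \<bullet> A = real CARD('n) * e 1 \<Longrightarrow> Zp e A [] p \<in> (Kset e :: ('n::finite) zvec set)"
  using Zp_Zspace[of A "[]" e p] by (simp add: Kset_def Zp_def)

lemma Zm_K: "B \<bullet> B = real CARD('n) * e (-1) \<Longrightarrow> Zm e B [] p \<in> (Kset e :: ('n::finite) zvec set)"
  using Zm_Zspace[of B "[]" e p] by (simp add: Kset_def Zm_def)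

lemma exists_orth:
  assumes "CARD('n::finite) \<ge> 2"
  shows "\<exists>\<xi>::real^'n. \<xi> \<noteq> 0 \<and> h \<bullet> \<xi> = 0"
proof -
  obtain i :: 'n where True by auto
  have "UNIV - {i} \<noteq> {}"
  proof
    assume "UNIV - {i} = {}"
    then have "(UNIV::'n set) = {i}" by auto
    then have "CARD('n) = card {i}" by (simp only:)
    then have "CARD('n) = 1" by simp
    then show False using assms by simp
  qed
  then obtain j where j: "j \<noteq> i" by auto
  show ?thesis
  proof (cases "h $ i = 0 \<and> h $ j = 0")
    case True
    then show ?thesis by (intro exI[of _ "axis i 1"]) (simp add: inner_axis axis_eq_0_iff)
  next
    case False
    define \<xi> where "\<xi> = (h $ j) *\<^sub>R axis i 1 - (h $ i) *\<^sub>R axis j (1::real)"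
    have "\<xi> $ i = h $ j" "\<xi> $ j = - h $ i" using j by (simp_all add: \<xi>_def axis_def)
    then have "\<xi> \<noteq> 0" using False by (metis neg_equal_0_iff_equal zero_index)
    moreover have "h \<bullet> \<xi> = 0" by (simp add: \<xi>_def inner_diff_right inner_axis)
    ultimately show ?thesis by blast
  qed
qed

lemma scale_mv: "(k *\<^sub>R A) *v v = k *\<^sub>R (A *v (v::real^'n))"
  by (simp add: scaleR_matrix_vector_assoc)

lemma wave_cone_scale:
  assumes "zb \<in> wave_cone" "c \<noteq> 0"
  shows "c *\<^sub>R zb \<in> (wave_cone :: ('n::finite) zvec set)"
proof -
  obtain r v m s p where zb: "zb = (r, v, m, s, p)" by (cases zb) auto
  from assms(1) obtain \<xi> \<tau> where
    z: "zb \<in> Zspace" and ne: "(\<xi>, \<tau>) \<noteq> (0, 0)" and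
    e1: "(s + p *\<^sub>R mat 1) *v \<xi> + \<tau> *\<^sub>R v = 0" and e2: "v \<bullet> \<xi> = 0" and e3: "m \<bullet> \<xi> + \<tau> * r = 0"
    and rv: "(r, v) \<noteq> (0, 0)"
    unfolding wave_cone_def zb by auto
  have "c *\<^sub>R zb \<in> Zspace" using Zspace_lin[OF z z, of c 0] by simp
  moreover have "(c *\<^sub>R s + (c * p) *\<^sub>R mat 1) *v \<xi> + \<tau> *\<^sub>R (c *\<^sub>R v) = 0"
  proof -
    have eq: "(c *\<^sub>R s + (c * p) *\<^sub>R mat 1) = c *\<^sub>R (s + p *\<^sub>R mat 1)" by (simp add: scaleR_add_right)
    have "(c *\<^sub>R s + (c * p) *\<^sub>R mat 1) *v \<xi> = c *\<^sub>R ((s + p *\<^sub>R mat 1) *v \<xi>)"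
      unfolding eq by (rule scale_mv)
    moreover have "c *\<^sub>R ((s + p *\<^sub>R mat 1) *v \<xi>) + \<tau> *\<^sub>R (c *\<^sub>R v) = c *\<^sub>R ((s + p *\<^sub>R mat 1) *v \<xi> + \<tau> *\<^sub>R v)"
      by (simp add: scaleR_add_right mult.commute)
    ultimately show ?thesis using e1 by simp
  qed
  moreover have "(c *\<^sub>R m) \<bullet> \<xi> + \<tau> * (c * r) = c * (m \<bullet> \<xi> + \<tau> * r)"
    by (simp add: algebra_simps)
  then have "(c *\<^sub>R m) \<bullet> \<xi> + \<tau> * (c * r) = 0" using e3 by simp
  moreover have "(c * r, c *\<^sub>R v) \<noteq> (0, 0)" using rv assms(2) by auto
  ultimately show ?thesis unfolding wave_cone_def zb using ne e2
    apply (simp only: scaleR_Pair mem_Collect_eq prod.case)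
    apply (intro conjI exI[of _ \<xi>] exI[of _ \<tau>])
    apply simp_all
    done
qed



lemma quad_comb:
  fixes l t1 t2 a b c d :: real
  assumes "l * t1 + (1 - l) * t2 = 0" "l * t1^2 + (1 - l) * t2^2 = 1"
  shows "l * ((a + t1 * b) * (c + t1 * d)) + (1 - l) * ((a + t2 * b) * (c + t2 * d)) = a * c + b * d"
proof -
  have "l * ((a + t1 * b) * (c + t1 * d)) + (1 - l) * ((a + t2 * b) * (c + t2 * d))
      = a * c + (a * d + b * c) * (l * t1 + (1 - l) * t2) + b * d * (l * t1^2 + (1 - l) * t2^2)"
    by (simp add: algebra_simps power2_eq_square)
  then show ?thesis using assms by simp
qed

lemma inner_line: "(A + t *\<^sub>R g) \<bullet> (A + t *\<^sub>R g) = A \<bullet> A + 2 * t * (A \<bullet> g) + t^2 * (g \<bullet> g)"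
proof -
  have "(A + t *\<^sub>R g) \<bullet> (A + t *\<^sub>R g) = A \<bullet> A + t * (A \<bullet> g) + t * (g \<bullet> A) + t * (t * (g \<bullet> g))"
    by (simp add: inner_add_left inner_add_right distrib_left)
  also have "g \<bullet> A = A \<bullet> g" by (rule inner_commute)
  finally show ?thesis by (simp add: power2_eq_square)
qed

lemma chord_split:
  fixes A g :: "real^'n"
  assumes "g \<noteq> 0"
  shows "\<exists>A1 A2 l. 0 \<le> l \<and> l \<le> 1 \<and> A1 \<noteq> A2 \<and> A1 \<bullet> A1 = A \<bullet> A + g \<bullet> g \<and> A2 \<bullet> A2 = A \<bullet> A + g \<bullet> g
     \<and> A = l *\<^sub>R A1 + (1 - l) *\<^sub>R A2
     \<and> outer A A + outer g g = l *\<^sub>R outer A1 A1 + (1 - l) *\<^sub>R outer A2 A2"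
proof -
  define a where "a = A \<bullet> g"
  define q where "q = g \<bullet> g"
  have q: "q > 0" using assms by (simp add: q_def)
  define D where "D = sqrt (a^2 + q^2)"
  have D2: "D^2 = a^2 + q^2" by (simp add: D_def)
  have Dpos: "D > 0" using q by (simp add: D_def add_nonneg_pos)
  have aD: "\<bar>a\<bar> < D"
  proof -
    have "a^2 < D^2" using D2 q by simp
    then show ?thesis using Dpos by (metis abs_of_pos power2_abs power_less_imp_less_base less_imp_le)
  qed
  define t1 where "t1 = (D - a) / q"
  define t2 where "t2 = - (D + a) / q"
  define l where "l = (D + a) / (2 * D)"
  have l0: "0 \<le> l" using aD Dpos by (simp add: l_def)
  have l1: "l \<le> 1" using aD Dpos by (simp add: l_def)
  have s1: "l * t1 + (1 - l) * t2 = 0"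
    using Dpos q by (simp add: l_def t1_def t2_def field_simps)
  have s2: "l * t1^2 + (1 - l) * t2^2 = 1"
  proof -
    have "l * t1^2 + (1 - l) * t2^2 = (D^2 - a^2) / q^2"
      using Dpos q by (simp add: l_def t1_def t2_def field_simps power2_eq_square)
    then show ?thesis using D2 q by simp
  qed
  have r1: "2 * t1 * a + t1^2 * q = q"
  proof -
    have "2 * t1 * a + t1^2 * q = (D^2 - a^2) / q"
      using q by (simp add: t1_def field_simps power2_eq_square)
    then show ?thesis using D2 q by (simp add: power2_eq_square)
  qed
  have r2: "2 * t2 * a + t2^2 * q = q"
  proof -
    have "2 * t2 * a + t2^2 * q = (D^2 - a^2) / q"
      using q by (simp add: t2_def field_simps power2_eq_square)
    then show ?thesis using D2 q by (simp add: power2_eq_square)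
  qed
  have t12: "t1 \<noteq> t2"
  proof
    assume "t1 = t2"
    then have "(D - a) / q = - (D + a) / q" by (simp add: t1_def t2_def)
    then have "D - a = - (D + a)" using q by (simp add: divide_cancel_right)
    then show False using Dpos by simp
  qed
  define A1 where "A1 = A + t1 *\<^sub>R g"
  define A2 where "A2 = A + t2 *\<^sub>R g"
  have ne: "A1 \<noteq> A2"
  proof
    assume "A1 = A2"
    then have "(t1 - t2) *\<^sub>R g = 0" by (simp add: A1_def A2_def algebra_simps)
    then show False using t12 assms by simp
  qed
  have n1: "A1 \<bullet> A1 = A \<bullet> A + g \<bullet> g"
    using r1 unfolding A1_def inner_line a_def q_def by simp
  have n2: "A2 \<bullet> A2 = A \<bullet> A + g \<bullet> g"
    using r2 unfolding A2_def inner_line a_def q_def by simp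
  have comb: "A = l *\<^sub>R A1 + (1 - l) *\<^sub>R A2"
  proof -
    have "l *\<^sub>R A1 + (1 - l) *\<^sub>R A2 = A + (l * t1 + (1 - l) * t2) *\<^sub>R g"
      by (simp add: A1_def A2_def vec_eq_iff algebra_simps)
    then show ?thesis using s1 by simp
  qed
  have outer_eq: "outer A A + outer g g = l *\<^sub>R outer A1 A1 + (1 - l) *\<^sub>R outer A2 A2"
    unfolding vec_eq_iff
  proof (intro allI)
    fix i j
    have "l * ((A$i + t1 * g$i) * (A$j + t1 * g$j)) + (1 - l) * ((A$i + t2 * g$i) * (A$j + t2 * g$j))
        = A$i * A$j + g$i * g$j" by (rule quad_comb[OF s1 s2])
    then show "(outer A A + outer g g) $ i $ j = (l *\<^sub>R outer A1 A1 + (1 - l) *\<^sub>R outer A2 A2) $ i $ j"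
      by (simp add: outer_def A1_def A2_def)
  qed
  show ?thesis using l0 l1 ne n1 n2 comb outer_eq by blast
qed

lemma wc_slice:
  assumes n2: "CARD('n::finite) \<ge> 2" and ne: "A1 \<noteq> A2" and eq: "A1 \<bullet> A1 = A2 \<bullet> A2"
  shows "((0::real), A1 - A2, s *\<^sub>R (A1 - A2), outer A1 A1 - outer A2 A2, (0::real)) \<in> (wave_cone :: 'n zvec set)"
proof -
  obtain \<xi> :: "real^'n" where xi: "\<xi> \<noteq> 0" "(A1 - A2) \<bullet> \<xi> = 0" using exists_orth[OF n2] by blast
  define c where "c = A1 \<bullet> \<xi>"
  have c2: "A2 \<bullet> \<xi> = c" using xi(2) by (simp add: c_def inner_diff_left)
  have "(outer A1 A1 - outer A2 A2 + 0 *\<^sub>R mat 1) *v \<xi> + (- c) *\<^sub>R (A1 - A2) = 0"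
    by (simp add: matrix_vector_mult_diff_rdistrib outer_mv c_def c2 inner_commute[of \<xi>] algebra_simps)
  moreover have "(s *\<^sub>R (A1 - A2)) \<bullet> \<xi> + (- c) * 0 = 0" using xi(2) by simp
  moreover have "outer A1 A1 - outer A2 A2 \<in> {s. transpose s = s \<and> trace s = 0}"
    using eq by (simp add: transpose_diff transpose_outer trace_sub trace_outer)
  ultimately show ?thesis unfolding wave_cone_def using xi ne
    apply (simp only: mem_Collect_eq prod.case Zspace_iff)
    apply (intro conjI exI[of _ \<xi>] exI[of _ "-c"])
    apply simp_all
    done
qed

lemma wc_cross:
  assumes n2: "CARD('n::finite) \<ge> 2"
    and A: "A \<bullet> A = real CARD('n) * e 1" and B: "B \<bullet> B = real CARD('n) * e (-1)"
  shows "((2::real), A - B, A + B, outer A A - outer B B - (e 1 - e (-1)) *\<^sub>R mat 1, e 1 - e (-1))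
      \<in> (wave_cone :: 'n zvec set)"
proof -
  obtain \<xi> :: "real^'n" where xi: "\<xi> \<noteq> 0" "(A - B) \<bullet> \<xi> = 0" using exists_orth[OF n2] by blast
  define c where "c = A \<bullet> \<xi>"
  have c2: "B \<bullet> \<xi> = c" using xi(2) by (simp add: c_def inner_diff_left)
  have "(outer A A - outer B B - (e 1 - e (-1)) *\<^sub>R mat 1 + (e 1 - e (-1)) *\<^sub>R mat 1) *v \<xi> + (- c) *\<^sub>R (A - B) = 0"
    by (simp add: matrix_vector_mult_diff_rdistrib outer_mv c_def c2 inner_commute[of \<xi>] algebra_simps)
  moreover have "(A + B) \<bullet> \<xi> + (- c) * 2 = 0" using c2 by (simp add: c_def inner_add_left)
  moreover have "transpose (outer A A - outer B B - (e 1 - e (-1)) *\<^sub>R mat 1) = outer A A - outer B B - (e 1 - e (-1)) *\<^sub>R mat 1"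
    by (simp add: transpose_diff transpose_outer transpose_scalar)
  moreover have "trace (outer A A - outer B B - (e 1 - e (-1)) *\<^sub>R mat 1) = A \<bullet> A - B \<bullet> B - (e 1 - e (-1)) * real CARD('n)"
    by (simp add: trace_sub trace_outer trace_scale trace_I)
  then have "trace (outer A A - outer B B - (e 1 - e (-1)) *\<^sub>R mat 1) = 0"
    using A B by (simp add: algebra_simps)
  ultimately show ?thesis unfolding wave_cone_def using xi
    apply (simp only: mem_Collect_eq prod.case Zspace_iff)
    apply (intro conjI exI[of _ \<xi>] exI[of _ "-c"])
    apply simp_all
    done
qed



definition Rrep :: "(real \<Rightarrow> real) \<Rightarrow> ('n::finite) zvec \<Rightarrow> bool" where
  "Rrep e z \<longleftrightarrow> (\<exists>\<mu> A gs B gs' p1 p2. 0 \<le> \<mu> \<and> \<mu> \<le> 1 \<and>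
      A \<bullet> A + SQ gs = real CARD('n) * e 1 \<and> B \<bullet> B + SQ gs' = real CARD('n) * e (-1) \<and>
      p1 - p2 = e 1 - e (-1) \<and> z = \<mu> *\<^sub>R Zp e A gs p1 + (1 - \<mu>) *\<^sub>R Zm e B gs' p2)"

lemma Zp_comb:
  assumes "A = l *\<^sub>R A1 + (1 - l) *\<^sub>R A2"
    and "outer A A + outer g g = l *\<^sub>R outer A1 A1 + (1 - l) *\<^sub>R outer A2 A2"
  shows "Zp e A (g # gs) p = l *\<^sub>R Zp e A1 gs p + (1 - l) *\<^sub>R Zp e A2 gs p"
proof -
  have "outer A A + (outer g g + PS gs) - e 1 *\<^sub>R mat 1
      = l *\<^sub>R (outer A1 A1 + PS gs - e 1 *\<^sub>R mat 1) + (1 - l) *\<^sub>R (outer A2 A2 + PS gs - e 1 *\<^sub>R mat 1)"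
    using assms(2) by (simp add: algebra_simps)
  moreover have "p = l * p + (1 - l) * p" by (simp add: algebra_simps)
  ultimately show ?thesis using assms(1) by (simp add: Zp_def)
qed

lemma Zm_comb:
  assumes "B = l *\<^sub>R B1 + (1 - l) *\<^sub>R B2"
    and "outer B B + outer g g = l *\<^sub>R outer B1 B1 + (1 - l) *\<^sub>R outer B2 B2"
  shows "Zm e B (g # gs) p = l *\<^sub>R Zm e B1 gs p + (1 - l) *\<^sub>R Zm e B2 gs p"
proof -
  have "outer B B + (outer g g + PS gs) - e (-1) *\<^sub>R mat 1
      = l *\<^sub>R (outer B1 B1 + PS gs - e (-1) *\<^sub>R mat 1) + (1 - l) *\<^sub>R (outer B2 B2 + PS gs - e (-1) *\<^sub>R mat 1)"
    using assms(2) by (simp add: algebra_simps)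
  moreover have "p = l * p + (1 - l) * p" by (simp add: algebra_simps)
  moreover have "- B = l *\<^sub>R (- B1) + (1 - l) *\<^sub>R (- B2)" using assms(1) by (simp add: algebra_simps)
  ultimately show ?thesis using assms(1) by (simp add: Zm_def)
qed

lemma Zp_diff: "Zp e A1 gs p - Zp e A2 gs p = (0, A1 - A2, 1 *\<^sub>R (A1 - A2), outer A1 A1 - outer A2 A2, 0)"
  by (simp add: Zp_def)
lemma Zm_diff: "Zm e A1 gs p - Zm e A2 gs p = (0, A1 - A2, (-1) *\<^sub>R (A1 - A2), outer A1 A1 - outer A2 A2, 0)"
  by (simp add: Zm_def)

lemma Zp_zero: "Zp e A (0 # gs) p = Zp e A gs p"
  by (simp add: Zp_def)
lemma Zm_zero: "Zm e A (0 # gs) p = Zm e A gs p"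
  by (simp add: Zm_def)

context
  fixes e :: "real \<Rightarrow> real" and Pr :: "('n::finite) zvec \<Rightarrow> bool"
  assumes n2: "CARD('n) \<ge> 2"
    and PK: "\<And>k. k \<in> Kset e \<Longrightarrow> Pr k"
    and Psplit: "\<And>z0 zb l. z0 \<in> Zspace \<Longrightarrow> zb \<in> wave_cone \<Longrightarrow> 0 \<le> l \<Longrightarrow> l \<le> 1 \<Longrightarrow>
        Pr z0 \<Longrightarrow> Pr (z0 + zb) \<Longrightarrow> Pr (z0 + l *\<^sub>R zb)"
begin

lemma split_comb:
  assumes "z1 \<in> Zspace" "z2 \<in> Zspace" "z1 - z2 \<in> wave_cone" "0 \<le> l" "l \<le> 1" "Pr z1" "Pr z2"
  shows "Pr (l *\<^sub>R z1 + (1 - l) *\<^sub>R z2)"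
proof -
  have "Pr (z2 + l *\<^sub>R (z1 - z2))" using Psplit[OF assms(2,3,4,5)] assms(6,7) by simp
  moreover have "z2 + l *\<^sub>R (z1 - z2) = l *\<^sub>R z1 + (1 - l) *\<^sub>R z2" by (simp add: algebra_simps)
  ultimately show ?thesis by simp
qed

lemma base_mixed:
  fixes A B :: "real^'n"
  assumes "0 \<le> \<mu>" "\<mu> \<le> 1" and A: "A \<bullet> A = real CARD('n) * e 1" and B: "B \<bullet> B = real CARD('n) * e (-1)"
    and p: "p1 - p2 = e 1 - e (-1)"
  shows "Pr (\<mu> *\<^sub>R Zp e A [] p1 + (1 - \<mu>) *\<^sub>R Zm e B [] p2)"
proof (rule split_comb)
  show "Zp e A [] p1 \<in> Zspace" using Zp_Zspace[of A "[]" e] A by simp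
  show "Zm e B [] p2 \<in> Zspace" using Zm_Zspace[of B "[]" e] B by simp
  have "Zp e A [] p1 - Zm e B [] p2 =
      ((2::real), A - B, A + B, outer A A - outer B B - (e 1 - e (-1)) *\<^sub>R mat 1, e 1 - e (-1))"
    using p by (simp add: Zp_def Zm_def algebra_simps)
  then show "Zp e A [] p1 - Zm e B [] p2 \<in> wave_cone" using wc_cross[OF n2 A B] by simp
  show "Pr (Zp e A [] p1)" using PK Zp_K[of A e p1] A by blast
  show "Pr (Zm e B [] p2)" using PK Zm_K[of B e p2] B by blast
qed (use assms in auto)

lemma Splus:
  fixes B :: "real^'n"
  assumes mu: "0 < \<mu>" "\<mu> \<le> 1" and B: "B \<bullet> B = real CARD('n) * e (-1)"
    and p: "p1 - p2 = e 1 - e (-1)"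
  shows "\<forall>A::real^'n. A \<bullet> A + SQ gs = real CARD('n) * e 1 \<longrightarrow> Pr (\<mu> *\<^sub>R Zp e A gs p1 + (1 - \<mu>) *\<^sub>R Zm e B [] p2)"
proof (induction gs)
  case Nil
  then show ?case using base_mixed[of \<mu> _ B p1 p2] mu B p by simp
next
  case (Cons g gs)
  show ?case
  proof (intro allI impI)
    fix A :: "real^'n" assume hA: "A \<bullet> A + SQ (g # gs) = real CARD('n) * e 1"
    show "Pr (\<mu> *\<^sub>R Zp e A (g # gs) p1 + (1 - \<mu>) *\<^sub>R Zm e B [] p2)"
    proof (cases "g = 0")
      case True
      then show ?thesis using Cons.IH hA by (simp add: Zp_zero)
    next
      case False
      obtain A1 A2 l where l: "0 \<le> l" "l \<le> 1" and ne: "A1 \<noteq> A2"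
        and n1: "A1 \<bullet> A1 = A \<bullet> A + g \<bullet> g" and n2': "A2 \<bullet> A2 = A \<bullet> A + g \<bullet> g"
        and comb: "A = l *\<^sub>R A1 + (1 - l) *\<^sub>R A2"
        and oc: "outer A A + outer g g = l *\<^sub>R outer A1 A1 + (1 - l) *\<^sub>R outer A2 A2"
        using chord_split[OF False, of A] by blast
      define W where "W X = \<mu> *\<^sub>R Zp e X gs p1 + (1 - \<mu>) *\<^sub>R Zm e B [] p2" for X
      have c1: "A1 \<bullet> A1 + SQ gs = real CARD('n) * e 1" using hA n1 by simp
      have c2: "A2 \<bullet> A2 + SQ gs = real CARD('n) * e 1" using hA n2' by simp
      have W1: "W A1 \<in> Zspace" unfolding W_def
        by (rule Zspace_lin[OF Zp_Zspace[where e=e, OF c1] Zm_Zspace[where e=e]]) (use B in simp)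
      have W2: "W A2 \<in> Zspace" unfolding W_def
        by (rule Zspace_lin[OF Zp_Zspace[where e=e, OF c2] Zm_Zspace[where e=e]]) (use B in simp)
      have "W A1 - W A2 = \<mu> *\<^sub>R (Zp e A1 gs p1 - Zp e A2 gs p1)"
        by (simp add: W_def algebra_simps)
      also have "\<dots> \<in> wave_cone"
        unfolding Zp_diff
        by (rule wave_cone_scale[OF wc_slice[OF n2 ne]]) (use n1 n2' mu in simp_all)
      finally have wc: "W A1 - W A2 \<in> wave_cone" .
      have "Pr (l *\<^sub>R W A1 + (1 - l) *\<^sub>R W A2)"
        by (rule split_comb[OF W1 W2 wc l]) (use Cons.IH c1 c2 in \<open>simp_all add: W_def\<close>)
      moreover have "l *\<^sub>R W A1 + (1 - l) *\<^sub>R W A2 = \<mu> *\<^sub>R Zp e A (g # gs) p1 + (1 - \<mu>) *\<^sub>R Zm e B [] p2"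
        unfolding Zp_comb[OF comb oc] W_def by (simp add: algebra_simps)
      ultimately show ?thesis by simp
    qed
  qed
qed

lemma Sminus:
  fixes A :: "real^'n"
  assumes mu: "0 \<le> \<mu>" "\<mu> < 1" and A: "A \<bullet> A + SQ gs = real CARD('n) * e 1"
    and p: "p1 - p2 = e 1 - e (-1)"
  shows "\<forall>B::real^'n. B \<bullet> B + SQ gs' = real CARD('n) * e (-1) \<longrightarrow> Pr (\<mu> *\<^sub>R Zp e A gs p1 + (1 - \<mu>) *\<^sub>R Zm e B gs' p2)"
proof (induction gs')
  case Nil
  show ?case
  proof (intro allI impI)
    fix B :: "real^'n" assume hB: "B \<bullet> B + SQ [] = real CARD('n) * e (-1)"
    show "Pr (\<mu> *\<^sub>R Zp e A gs p1 + (1 - \<mu>) *\<^sub>R Zm e B [] p2)"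
    proof (cases "\<mu> = 0")
      case True
      then show ?thesis using PK Zm_K[of B e p2] hB by simp
    next
      case False
      then show ?thesis using Splus[of \<mu> B p1 p2 gs] mu hB A p by simp
    qed
  qed
next
  case (Cons g gs')
  show ?case
  proof (intro allI impI)
    fix B :: "real^'n" assume hB: "B \<bullet> B + SQ (g # gs') = real CARD('n) * e (-1)"
    show "Pr (\<mu> *\<^sub>R Zp e A gs p1 + (1 - \<mu>) *\<^sub>R Zm e B (g # gs') p2)"
    proof (cases "g = 0")
      case True
      then show ?thesis using Cons.IH hB by (simp add: Zm_zero)
    next
      case False
      obtain B1 B2 l where l: "0 \<le> l" "l \<le> 1" and ne: "B1 \<noteq> B2"
        and n1: "B1 \<bullet> B1 = B \<bullet> B + g \<bullet> g" and n2': "B2 \<bullet> B2 = B \<bullet> B + g \<bullet> g"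
        and comb: "B = l *\<^sub>R B1 + (1 - l) *\<^sub>R B2"
        and oc: "outer B B + outer g g = l *\<^sub>R outer B1 B1 + (1 - l) *\<^sub>R outer B2 B2"
        using chord_split[OF False, of B] by blast
      define W where "W X = \<mu> *\<^sub>R Zp e A gs p1 + (1 - \<mu>) *\<^sub>R Zm e X gs' p2" for X
      have c1: "B1 \<bullet> B1 + SQ gs' = real CARD('n) * e (-1)" using hB n1 by simp
      have c2: "B2 \<bullet> B2 + SQ gs' = real CARD('n) * e (-1)" using hB n2' by simp
      have W1: "W B1 \<in> Zspace" unfolding W_def
        by (rule Zspace_lin[OF Zp_Zspace[where e=e, OF A] Zm_Zspace[where e=e, OF c1]])
      have W2: "W B2 \<in> Zspace" unfolding W_def
        by (rule Zspace_lin[OF Zp_Zspace[where e=e, OF A] Zm_Zspace[where e=e, OF c2]])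
      have "W B1 - W B2 = (1 - \<mu>) *\<^sub>R (Zm e B1 gs' p2 - Zm e B2 gs' p2)"
        by (simp add: W_def algebra_simps)
      also have "\<dots> \<in> wave_cone"
        unfolding Zm_diff
        by (rule wave_cone_scale[OF wc_slice[OF n2 ne]]) (use n1 n2' mu in simp_all)
      finally have wc: "W B1 - W B2 \<in> wave_cone" .
      have "Pr (l *\<^sub>R W B1 + (1 - l) *\<^sub>R W B2)"
        by (rule split_comb[OF W1 W2 wc l]) (use Cons.IH c1 c2 in \<open>simp_all add: W_def\<close>)
      moreover have "l *\<^sub>R W B1 + (1 - l) *\<^sub>R W B2 = \<mu> *\<^sub>R Zp e A gs p1 + (1 - \<mu>) *\<^sub>R Zm e B (g # gs') p2"
        unfolding Zm_comb[OF comb oc] W_def by (simp add: algebra_simps)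
      ultimately show ?thesis by simp
    qed
  qed
qed

lemma Rrep_Pr:
  assumes "Rrep e z"
  shows "Pr z"
proof -
  obtain \<mu> A gs B gs' p1 p2 where mu: "0 \<le> \<mu>" "\<mu> \<le> 1"
    and A: "A \<bullet> A + SQ gs = real CARD('n) * e 1" and B: "B \<bullet> B + SQ gs' = real CARD('n) * e (-1)"
    and p: "p1 - p2 = e 1 - e (-1)" and z: "z = \<mu> *\<^sub>R Zp e A gs p1 + (1 - \<mu>) *\<^sub>R Zm e B gs' p2"
    using assms unfolding Rrep_def by blast
  show ?thesis
  proof (cases "\<mu> < 1")
    case True
    then show ?thesis using Sminus[OF mu(1) True A p, of gs'] B z by blast
  next
    case False
    then have m1: "\<mu> = 1" using mu by simp
    have "0 \<le> B \<bullet> B + SQ gs'" using SQ_nonneg[of gs'] by simp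
    then have en: "0 \<le> real CARD('n) * e (-1)" using B by simp
    obtain i :: 'n where True by auto
    define B0 where "B0 = sqrt (real CARD('n) * e (-1)) *\<^sub>R axis i (1::real)"
    have B0: "B0 \<bullet> B0 = real CARD('n) * e (-1)"
      using en by (simp add: B0_def inner_axis_axis)
    have "Pr (1 *\<^sub>R Zp e A gs p1 + (1 - 1) *\<^sub>R Zm e B0 [] p2)"
      using Splus[of 1 B0 p1 p2 gs] B0 p A by simp
    then show ?thesis using z m1 by simp
  qed
qed

end



lemma Rrep_hull:
  assumes n2: "CARD('n::finite) \<ge> 2" and R: "Rrep e (z :: 'n zvec)"
  shows "z \<in> convex hull (Kset e)"
proof (rule Rrep_Pr[of e "\<lambda>z. z \<in> convex hull (Kset e)", OF n2 _ _ R])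
  show "\<And>k. k \<in> Kset e \<Longrightarrow> k \<in> convex hull Kset e" by (rule hull_inc)
  fix z0 zb :: "'n zvec" and l :: real
  assume "0 \<le> l" "l \<le> 1" "z0 \<in> convex hull Kset e" "z0 + zb \<in> convex hull Kset e"
  then have "(1 - l) *\<^sub>R z0 + l *\<^sub>R (z0 + zb) \<in> convex hull Kset e"
    using convexD[OF convex_convex_hull, of z0 "Kset e" "z0 + zb" "1 - l" l] by simp
  moreover have "(1 - l) *\<^sub>R z0 + l *\<^sub>R (z0 + zb) = z0 + l *\<^sub>R zb" by (simp add: algebra_simps)
  ultimately show "z0 + l *\<^sub>R zb \<in> convex hull Kset e" by simp
qed

lemma Rrep_lambda:
  assumes n2: "CARD('n::finite) \<ge> 2" and h: "lambda_convex h" and R: "Rrep e (z :: 'n zvec)"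
  shows "ereal (h z) \<le> (SUP k\<in>Kset e. ereal (h k))"
proof (rule Rrep_Pr[of e "\<lambda>z. ereal (h z) \<le> (SUP k\<in>Kset e. ereal (h k))", OF n2 _ _ R])
  show "\<And>k. k \<in> Kset e \<Longrightarrow> ereal (h k) \<le> (SUP k\<in>Kset e. ereal (h k))" by (rule SUP_upper)
  fix z0 zb :: "'n zvec" and l :: real
  assume z0: "z0 \<in> Zspace" and zb: "zb \<in> wave_cone" and l: "0 \<le> l" "l \<le> 1"
    and a1: "ereal (h z0) \<le> (SUP k\<in>Kset e. ereal (h k))"
    and a2: "ereal (h (z0 + zb)) \<le> (SUP k\<in>Kset e. ereal (h k))"
  have cv: "convex_on UNIV (\<lambda>s::real. h (z0 + s *\<^sub>R zb))" using h z0 zb unfolding lambda_convex_def by blast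
  have "h (z0 + ((1 - l) *\<^sub>R 0 + l *\<^sub>R 1) *\<^sub>R zb) \<le> (1 - l) * h (z0 + 0 *\<^sub>R zb) + l * h (z0 + 1 *\<^sub>R zb)"
    using convex_onD[OF cv, of l 0 1] l by simp
  then have "h (z0 + l *\<^sub>R zb) \<le> (1 - l) * h z0 + l * h (z0 + zb)" by simp
  also have "\<dots> \<le> max (h z0) (h (z0 + zb))"
  proof -
    have "(1 - l) * h z0 \<le> (1 - l) * max (h z0) (h (z0 + zb))" using l by (simp add: mult_left_mono)
    moreover have "l * h (z0 + zb) \<le> l * max (h z0) (h (z0 + zb))" using l by (simp add: mult_left_mono)
    ultimately show ?thesis by (simp add: algebra_simps)
  qed
  finally have "h (z0 + l *\<^sub>R zb) \<le> h z0 \<or> h (z0 + l *\<^sub>R zb) \<le> h (z0 + zb)"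
    by (simp add: max_def split: if_splits)
  then show "ereal (h (z0 + l *\<^sub>R zb)) \<le> (SUP k\<in>Kset e. ereal (h k))"
  proof
    assume "h (z0 + l *\<^sub>R zb) \<le> h z0"
    then have "ereal (h (z0 + l *\<^sub>R zb)) \<le> ereal (h z0)" by simp
    then show ?thesis using a1 by (rule order_trans)
  next
    assume "h (z0 + l *\<^sub>R zb) \<le> h (z0 + zb)"
    then have "ereal (h (z0 + l *\<^sub>R zb)) \<le> ereal (h (z0 + zb))" by simp
    then show ?thesis using a2 by (rule order_trans)
  qed
qed

lemma outer_sum_left: "outer (\<Sum>i\<in>I. f i) w = (\<Sum>i\<in>I. outer (f i) w)"
  by (simp add: outer_def vec_eq_iff sum_distrib_right)
lemma outer_sum_right: "outer w (\<Sum>i\<in>I. f i) = (\<Sum>i\<in>I. outer w (f i))"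
  by (simp add: outer_def vec_eq_iff sum_distrib_left)

lemma slice_rep:
  fixes V :: "'i \<Rightarrow> real^'n" and u :: "'i \<Rightarrow> real"
  assumes fin: "finite I" and u0: "\<And>i. i \<in> I \<Longrightarrow> 0 \<le> u i" and V: "\<And>i. i \<in> I \<Longrightarrow> V i \<bullet> V i = r"
    and r: "r \<ge> 0"
  shows "\<exists>A gs. A \<bullet> A + SQ gs = r \<and> (\<Sum>i\<in>I. u i *\<^sub>R V i) = (sum u I) *\<^sub>R A
     \<and> (\<Sum>i\<in>I. u i *\<^sub>R outer (V i) (V i)) = (sum u I) *\<^sub>R (outer A A + PS gs)"
proof (cases "sum u I = 0")
  case True
  then have u: "\<And>i. i \<in> I \<Longrightarrow> u i = 0" using sum_nonneg_eq_0_iff[OF fin] u0 by blast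
  obtain j :: 'n where True by auto
  define A where "A = sqrt r *\<^sub>R axis j (1::real)"
  have "A \<bullet> A + SQ [] = r" using r by (simp add: A_def inner_axis_axis)
  moreover have "(\<Sum>i\<in>I. u i *\<^sub>R V i) = (sum u I) *\<^sub>R A" using u True by simp
  moreover have "(\<Sum>i\<in>I. u i *\<^sub>R outer (V i) (V i)) = (sum u I) *\<^sub>R (outer A A + PS [])" using u True by simp
  ultimately show ?thesis by blast
next
  case False
  define \<mu> where "\<mu> = sum u I"
  have mu: "\<mu> > 0" using False u0 sum_nonneg[of I u] by (simp add: \<mu>_def order_less_le)
  define w where "w i = u i / \<mu>" for i
  have w0: "\<And>i. i \<in> I \<Longrightarrow> 0 \<le> w i" using u0 mu by (simp add: w_def)
  have sw: "sum w I = 1" using mu by (simp add: w_def \<mu>_def sum_divide_distrib[symmetric])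
  define A where "A = (\<Sum>i\<in>I. w i *\<^sub>R V i)"
  obtain xs where xs: "set xs = I" "distinct xs" using finite_distinct_list[OF fin] by blast
  define gs where "gs = map (\<lambda>i. sqrt (w i) *\<^sub>R (V i - A)) xs"
  have PSg: "PS gs = (\<Sum>i\<in>I. w i *\<^sub>R outer (V i - A) (V i - A))"
  proof -
    have "PS gs = (\<Sum>i\<leftarrow>xs. outer (sqrt (w i) *\<^sub>R (V i - A)) (sqrt (w i) *\<^sub>R (V i - A)))"
      by (simp add: PS_def gs_def o_def)
    also have "\<dots> = (\<Sum>i\<in>I. outer (sqrt (w i) *\<^sub>R (V i - A)) (sqrt (w i) *\<^sub>R (V i - A)))"
      using xs by (simp add: sum_list_distinct_conv_sum_set)
    also have "\<dots> = (\<Sum>i\<in>I. w i *\<^sub>R outer (V i - A) (V i - A))"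
      by (rule sum.cong) (use w0 in \<open>simp_all add: outer_scale_left outer_scale_right\<close>)
    finally show ?thesis .
  qed
  have SQg: "SQ gs = (\<Sum>i\<in>I. w i * ((V i - A) \<bullet> (V i - A)))"
  proof -
    have "SQ gs = (\<Sum>i\<leftarrow>xs. (sqrt (w i) *\<^sub>R (V i - A)) \<bullet> (sqrt (w i) *\<^sub>R (V i - A)))"
      by (simp add: SQ_def gs_def o_def)
    also have "\<dots> = (\<Sum>i\<in>I. (sqrt (w i) *\<^sub>R (V i - A)) \<bullet> (sqrt (w i) *\<^sub>R (V i - A)))"
      using xs by (simp add: sum_list_distinct_conv_sum_set)
    also have "\<dots> = (\<Sum>i\<in>I. w i * ((V i - A) \<bullet> (V i - A)))"
      by (rule sum.cong) (use w0 in \<open>simp_all add: mult.assoc[symmetric]\<close>)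
    finally show ?thesis .
  qed
  have ea: "(\<Sum>i\<in>I. w i *\<^sub>R outer (V i - A) (V i - A)) = (\<Sum>i\<in>I. w i *\<^sub>R outer (V i) (V i)) - outer A A"
  proof -
    have pt: "w i *\<^sub>R outer (V i - A) (V i - A) =
      (w i *\<^sub>R outer (V i) (V i) - outer (w i *\<^sub>R V i) A) - (outer A (w i *\<^sub>R V i) - w i *\<^sub>R outer A A)" for i
      by (simp add: outer_def vec_eq_iff algebra_simps)
    have "(\<Sum>i\<in>I. w i *\<^sub>R outer (V i - A) (V i - A)) =
      ((\<Sum>i\<in>I. w i *\<^sub>R outer (V i) (V i)) - (\<Sum>i\<in>I. outer (w i *\<^sub>R V i) A))
       - ((\<Sum>i\<in>I. outer A (w i *\<^sub>R V i)) - (\<Sum>i\<in>I. w i *\<^sub>R outer A A))"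
      unfolding pt by (simp only: sum_subtractf)
    also have "(\<Sum>i\<in>I. outer (w i *\<^sub>R V i) A) = outer A A"
      by (simp only: A_def outer_sum_left)
    also have "(\<Sum>i\<in>I. outer A (w i *\<^sub>R V i)) = outer A A"
      by (simp only: A_def outer_sum_right)
    also have "(\<Sum>i\<in>I. w i *\<^sub>R outer A A) = outer A A"
      using sw by (simp only: scaleR_sum_left[symmetric] scaleR_one)
    finally show ?thesis by simp
  qed
  have eb: "(\<Sum>i\<in>I. w i * ((V i - A) \<bullet> (V i - A))) = r - A \<bullet> A"
  proof -
    have pt: "w i * ((V i - A) \<bullet> (V i - A)) = (w i * r - 2 * ((w i *\<^sub>R V i) \<bullet> A)) + w i * (A \<bullet> A)"
      if i: "i \<in> I" for i
    proof -
      have "(V i - A) \<bullet> (V i - A) = V i \<bullet> V i - 2 * (V i \<bullet> A) + A \<bullet> A"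
        by (simp add: inner_diff_left inner_diff_right inner_commute[of A "V i"])
      then show ?thesis using V[OF i] by (simp add: algebra_simps)
    qed
    have "(\<Sum>i\<in>I. w i * ((V i - A) \<bullet> (V i - A))) = (\<Sum>i\<in>I. (w i * r - 2 * ((w i *\<^sub>R V i) \<bullet> A)) + w i * (A \<bullet> A))"
      by (rule sum.cong) (simp_all add: pt)
    also have "\<dots> = ((\<Sum>i\<in>I. w i) * r - 2 * ((\<Sum>i\<in>I. w i *\<^sub>R V i) \<bullet> A)) + (\<Sum>i\<in>I. w i) * (A \<bullet> A)"
      by (simp only: sum.distrib sum_subtractf sum_distrib_left[symmetric] sum_distrib_right[symmetric] inner_sum_left)
    finally show ?thesis using sw by (simp add: A_def)
  qed
  have "A \<bullet> A + SQ gs = r" using SQg eb by simp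
  moreover have "(\<Sum>i\<in>I. u i *\<^sub>R V i) = (sum u I) *\<^sub>R A"
  proof -
    have "(\<Sum>i\<in>I. u i *\<^sub>R V i) = (\<Sum>i\<in>I. \<mu> *\<^sub>R (w i *\<^sub>R V i))"
      using mu by (intro sum.cong) (simp_all add: w_def)
    then show ?thesis by (simp add: A_def scaleR_sum_right \<mu>_def)
  qed
  moreover have "(\<Sum>i\<in>I. u i *\<^sub>R outer (V i) (V i)) = (sum u I) *\<^sub>R (outer A A + PS gs)"
  proof -
    have "(\<Sum>i\<in>I. u i *\<^sub>R outer (V i) (V i)) = \<mu> *\<^sub>R (\<Sum>i\<in>I. w i *\<^sub>R outer (V i) (V i))"
      using mu by (simp add: scaleR_sum_right w_def)
    also have "(\<Sum>i\<in>I. w i *\<^sub>R outer (V i) (V i)) = outer A A + PS gs"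
      using PSg ea by simp
    finally show ?thesis by (simp add: \<mu>_def)
  qed
  ultimately show ?thesis by blast
qed



lemma sum_tuple:
  "(\<Sum>i\<in>S. ((a i)::real, (b i)::real^'n, (c i)::real^'n, (d i)::real^'n^'n, (f i)::real)) =
    (sum a S, sum b S, sum c S, sum d S, sum f S)"
  by (induction S rule: infinite_finite_induct) (simp_all add: zero_prod_def)

lemma K_char:
  fixes k :: "('n::finite) zvec"
  assumes "k \<in> Kset e"
  shows "(fst k = 1 \<or> fst k = -1) \<and> fst (snd k) \<bullet> fst (snd k) = real CARD('n) * e (fst k) \<and>
    k = (fst k, fst (snd k), fst k *\<^sub>R fst (snd k), outer (fst (snd k)) (fst (snd k)) - e (fst k) *\<^sub>R mat 1,
         snd (snd (snd (snd k))))"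
proof -
  obtain r v m s p where k: "k = (r, v, m, s, p)" by (cases k) auto
  have z: "transpose s = s" "trace s = 0" and r: "r = 1 \<or> r = -1" and m: "m = r *\<^sub>R v"
    and s: "outer v v - s = e r *\<^sub>R mat (1::real)"
    using assms unfolding Kset_def k by auto
  have s': "s = outer v v - e r *\<^sub>R mat 1" using s by (simp add: algebra_simps)
  have "trace s = v \<bullet> v - e r * real CARD('n)"
    unfolding s' by (simp add: trace_sub trace_outer trace_scale trace_I)
  then have "v \<bullet> v = real CARD('n) * e r" using z by (simp add: algebra_simps)
  then show ?thesis using r m s' k by simp
qed

lemma conv_Rrep:
  fixes z :: "('n::finite) zvec"
  assumes z: "z \<in> convex hull (Kset e)" and e1: "e 1 \<ge> 0" and em: "e (-1) \<ge> 0"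
  shows "Rrep e z"
proof -
  obtain S u where fin: "finite S" and SK: "S \<subseteq> Kset e" and u0: "\<forall>x\<in>S. 0 \<le> u x"
    and su: "sum u S = 1" and zs: "(\<Sum>v\<in>S. u v *\<^sub>R v) = z"
    using z unfolding convex_hull_explicit by blast
  define V where "V k = fst (snd k)" for k :: "'n zvec"
  define P where "P k = snd (snd (snd (snd k)))" for k :: "'n zvec"
  define Sp where "Sp = {k\<in>S. fst k = 1}"
  define Sm where "Sm = {k\<in>S. fst k = -1}"
  have kc: "\<And>k. k \<in> S \<Longrightarrow> (fst k = 1 \<or> fst k = -1) \<and> V k \<bullet> V k = real CARD('n) * e (fst k) \<and>
     k = (fst k, V k, fst k *\<^sub>R V k, outer (V k) (V k) - e (fst k) *\<^sub>R mat 1, P k)"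
    using K_char SK unfolding V_def P_def by blast
  have kr: "\<And>k. k \<in> S \<Longrightarrow> fst k = 1 \<or> fst k = -1" using kc by blast
  have SU: "S = Sp \<union> Sm" unfolding Sp_def Sm_def using kr by blast
  have dj: "Sp \<inter> Sm = {}" unfolding Sp_def Sm_def by auto
  have finp: "finite Sp" "finite Sm" using fin unfolding Sp_def Sm_def by auto
  have split: "sum f S = sum f Sp + sum f Sm" for f :: "'n zvec \<Rightarrow> 'b::comm_monoid_add"
    unfolding SU by (rule sum.union_disjoint[OF finp dj])
  obtain A gs where A: "A \<bullet> A + SQ gs = real CARD('n) * e 1"
    and Av: "(\<Sum>k\<in>Sp. u k *\<^sub>R V k) = (sum u Sp) *\<^sub>R A"
    and Ao: "(\<Sum>k\<in>Sp. u k *\<^sub>R outer (V k) (V k)) = (sum u Sp) *\<^sub>R (outer A A + PS gs)"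
    using slice_rep[OF finp(1), of u V "real CARD('n) * e 1"] u0 kc e1 unfolding Sp_def by auto
  obtain B gs' where B: "B \<bullet> B + SQ gs' = real CARD('n) * e (-1)"
    and Bv: "(\<Sum>k\<in>Sm. u k *\<^sub>R V k) = (sum u Sm) *\<^sub>R B"
    and Bo: "(\<Sum>k\<in>Sm. u k *\<^sub>R outer (V k) (V k)) = (sum u Sm) *\<^sub>R (outer B B + PS gs')"
    using slice_rep[OF finp(2), of u V "real CARD('n) * e (-1)"] u0 kc em unfolding Sm_def by auto
  define \<mu> where "\<mu> = sum u Sp"
  have sm: "sum u Sm = 1 - \<mu>" using su split[of u] by (simp add: \<mu>_def)
  have mu0: "0 \<le> \<mu>" using u0 unfolding \<mu>_def Sp_def by (auto intro: sum_nonneg)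
  have mu1: "\<mu> \<le> 1" using sm u0 unfolding Sm_def by (smt (verit) mem_Collect_eq sum_nonneg)
  define Pt where "Pt = (\<Sum>k\<in>S. u k * P k)"
  define p1 where "p1 = Pt + (1 - \<mu>) * (e 1 - e (-1))"
  define p2 where "p2 = Pt - \<mu> * (e 1 - e (-1))"
  have onSp: "\<And>k. k \<in> Sp \<Longrightarrow> fst k = 1" unfolding Sp_def by auto
  have onSm: "\<And>k. k \<in> Sm \<Longrightarrow> fst k = -1" unfolding Sm_def by auto
  have "z = (\<Sum>k\<in>S. u k *\<^sub>R (fst k, V k, fst k *\<^sub>R V k, outer (V k) (V k) - e (fst k) *\<^sub>R mat 1, P k))"
    unfolding zs[symmetric] by (rule sum.cong) (use kc in auto)
  also have "\<dots> = (\<Sum>k\<in>S. u k * fst k, \<Sum>k\<in>S. u k *\<^sub>R V k, \<Sum>k\<in>S. u k *\<^sub>R (fst k *\<^sub>R V k),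
     \<Sum>k\<in>S. u k *\<^sub>R (outer (V k) (V k) - e (fst k) *\<^sub>R mat 1), Pt)"
    by (simp add: sum_tuple Pt_def)
  finally have zt: "z = (\<Sum>k\<in>S. u k * fst k, \<Sum>k\<in>S. u k *\<^sub>R V k, \<Sum>k\<in>S. u k *\<^sub>R (fst k *\<^sub>R V k),
     \<Sum>k\<in>S. u k *\<^sub>R (outer (V k) (V k) - e (fst k) *\<^sub>R mat 1), Pt)" .
  have c1: "(\<Sum>k\<in>S. u k * fst k) = \<mu> - (1 - \<mu>)"
  proof -
    have "(\<Sum>k\<in>Sp. u k * fst k) = \<mu>" unfolding \<mu>_def by (rule sum.cong) (simp_all add: onSp)
    moreover have "(\<Sum>k\<in>Sm. u k * fst k) = - (1 - \<mu>)" unfolding sm[symmetric]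
      by (simp add: onSm sum_negf[symmetric])
    ultimately show ?thesis using split[of "\<lambda>k. u k * fst k"] by simp
  qed
  have c2: "(\<Sum>k\<in>S. u k *\<^sub>R V k) = \<mu> *\<^sub>R A + (1 - \<mu>) *\<^sub>R B"
    using split[of "\<lambda>k. u k *\<^sub>R V k"] Av Bv sm by (simp add: \<mu>_def)
  have c3: "(\<Sum>k\<in>S. u k *\<^sub>R (fst k *\<^sub>R V k)) = \<mu> *\<^sub>R A - (1 - \<mu>) *\<^sub>R B"
  proof -
    have "(\<Sum>k\<in>Sp. u k *\<^sub>R (fst k *\<^sub>R V k)) = (\<Sum>k\<in>Sp. u k *\<^sub>R V k)"
      by (rule sum.cong) (simp_all add: onSp)
    moreover have "(\<Sum>k\<in>Sm. u k *\<^sub>R (fst k *\<^sub>R V k)) = - (\<Sum>k\<in>Sm. u k *\<^sub>R V k)"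
      by (simp add: onSm sum_negf[symmetric])
    ultimately show ?thesis using split[of "\<lambda>k. u k *\<^sub>R (fst k *\<^sub>R V k)"] Av Bv sm
      by (simp add: \<mu>_def)
  qed
  have c4: "(\<Sum>k\<in>S. u k *\<^sub>R (outer (V k) (V k) - e (fst k) *\<^sub>R mat 1)) =
     \<mu> *\<^sub>R (outer A A + PS gs - e 1 *\<^sub>R mat 1) + (1 - \<mu>) *\<^sub>R (outer B B + PS gs' - e (-1) *\<^sub>R mat 1)"
  proof -
    have "(\<Sum>k\<in>Sp. u k *\<^sub>R (outer (V k) (V k) - e (fst k) *\<^sub>R mat 1))
        = (\<Sum>k\<in>Sp. u k *\<^sub>R outer (V k) (V k)) - (\<Sum>k\<in>Sp. u k) *\<^sub>R (e 1 *\<^sub>R mat 1)"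
    proof -
      have "(\<Sum>k\<in>Sp. u k *\<^sub>R (outer (V k) (V k) - e (fst k) *\<^sub>R mat 1))
        = (\<Sum>k\<in>Sp. u k *\<^sub>R outer (V k) (V k) - u k *\<^sub>R (e 1 *\<^sub>R mat 1))"
        by (rule sum.cong) (simp_all add: onSp scaleR_diff_right)
      then show ?thesis by (simp add: sum_subtractf scaleR_sum_left[symmetric] sum_distrib_right)
    qed
    moreover have "(\<Sum>k\<in>Sm. u k *\<^sub>R (outer (V k) (V k) - e (fst k) *\<^sub>R mat 1))
        = (\<Sum>k\<in>Sm. u k *\<^sub>R outer (V k) (V k)) - (\<Sum>k\<in>Sm. u k) *\<^sub>R (e (-1) *\<^sub>R mat 1)"
    proof -
      have "(\<Sum>k\<in>Sm. u k *\<^sub>R (outer (V k) (V k) - e (fst k) *\<^sub>R mat 1))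
        = (\<Sum>k\<in>Sm. u k *\<^sub>R outer (V k) (V k) - u k *\<^sub>R (e (-1) *\<^sub>R mat 1))"
        by (rule sum.cong) (simp_all add: onSm scaleR_diff_right)
      then show ?thesis by (simp add: sum_subtractf scaleR_sum_left[symmetric] sum_distrib_right)
    qed
    ultimately show ?thesis
      using split[of "\<lambda>k. u k *\<^sub>R (outer (V k) (V k) - e (fst k) *\<^sub>R mat 1)"] Ao Bo sm
      by (simp add: \<mu>_def scaleR_diff_right)
  qed
  have c5: "Pt = \<mu> * p1 + (1 - \<mu>) * p2" by (simp add: p1_def p2_def algebra_simps)
  have "z = \<mu> *\<^sub>R Zp e A gs p1 + (1 - \<mu>) *\<^sub>R Zm e B gs' p2"
    unfolding zt c1 c2 c3 c4 c5 by (simp add: Zp_def Zm_def)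
  moreover have "p1 - p2 = e 1 - e (-1)" by (simp add: p1_def p2_def algebra_simps)
  ultimately show ?thesis unfolding Rrep_def using mu0 mu1 A B by blast
qed



lemma half_sq: "(c::real) \<noteq> 0 \<Longrightarrow> (c/2) * (X/c) * (Y/c) = X*Y/(2*c)"
  by (simp add: field_simps power2_eq_square)

lemma add_half_fr: "(p::real) \<noteq> 0 \<Longrightarrow> q \<noteq> 0 \<Longrightarrow> X/(2*p) + Y/(2*q) = (q*X + p*Y)/(2*p*q)"
  by (simp add: field_simps)

lemma mid_real:
  fixes r x y a b :: real
  assumes "-1 < r" "r < 1"
  shows "(x*y - r*(a*y + x*b) + a*b) / (1 - r^2) =
     ((1+r)/2) * ((x+a)/(1+r)) * ((y+b)/(1+r)) + (1 - (1+r)/2) * ((x-a)/(1-r)) * ((y-b)/(1-r))"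
proof -
  have h1: "1 + r \<noteq> 0" "1 - r \<noteq> 0" using assms by auto
  have e: "1 - r^2 = (1 + r) * (1 - r)" by (simp add: power2_eq_square algebra_simps)
  have t1: "((1+r)/2) * ((x+a)/(1+r)) * ((y+b)/(1+r)) = (x+a)*(y+b)/(2*(1+r))"
    by (rule half_sq[OF h1(1)])
  have t2: "(1 - (1+r)/2) * ((x-a)/(1-r)) * ((y-b)/(1-r)) = (x-a)*(y-b)/(2*(1-r))"
  proof -
    have eq: "1 - (1+r)/2 = (1-r)/2" by (simp add: field_simps)
    show ?thesis unfolding eq by (rule half_sq[OF h1(2)])
  qed
  have "(x+a)*(y+b)/(2*(1+r)) + (x-a)*(y-b)/(2*(1-r)) = ((1-r)*((x+a)*(y+b)) + (1+r)*((x-a)*(y-b))) / (2*(1+r)*(1-r))"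
    by (rule add_half_fr[OF h1])
  also have "(1-r)*((x+a)*(y+b)) + (1+r)*((x-a)*(y-b)) = 2 * (x*y - r*(a*y + x*b) + a*b)"
    by (simp add: algebra_simps)
  finally have F: "(x+a)*(y+b)/(2*(1+r)) + (x-a)*(y-b)/(2*(1-r)) = (2 * (x*y - r*(a*y + x*b) + a*b)) / (2*(1+r)*(1-r))" .
  have G: "(2 * (x*y - r*(a*y + x*b) + a*b)) / (2*(1+r)*(1-r)) = (x*y - r*(a*y + x*b) + a*b) / ((1+r)*(1-r))"
    by (simp only: mult.assoc mult_divide_mult_cancel_left_if) simp
  show ?thesis unfolding t1 t2 e F G ..
qed

lemma Mmat_formula:
  fixes v m :: "real^'n" and \<sigma> :: "real^'n^'n"
  assumes "-1 < r" "r < 1"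
  shows "Mmat (r, v, m, \<sigma>, p) = ((1+r)/2) *\<^sub>R outer ((1/(1+r)) *\<^sub>R (v+m)) ((1/(1+r)) *\<^sub>R (v+m))
      + (1 - (1+r)/2) *\<^sub>R outer ((1/(1-r)) *\<^sub>R (v-m)) ((1/(1-r)) *\<^sub>R (v-m)) - \<sigma>"
proof -
  have "(1 / (1 - r^2)) *\<^sub>R (outer v v - r *\<^sub>R (outer m v + outer v m) + outer m m) =
      ((1+r)/2) *\<^sub>R outer ((1/(1+r)) *\<^sub>R (v+m)) ((1/(1+r)) *\<^sub>R (v+m))
      + (1 - (1+r)/2) *\<^sub>R outer ((1/(1-r)) *\<^sub>R (v-m)) ((1/(1-r)) *\<^sub>R (v-m))"
    unfolding vec_eq_iff
  proof (intro allI)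
    fix i j
    have "(v$i * v$j - r*(m$i * v$j + v$i * m$j) + m$i * m$j) / (1 - r^2) =
     ((1+r)/2) * ((v$i+m$i)/(1+r)) * ((v$j+m$j)/(1+r)) + (1 - (1+r)/2) * ((v$i-m$i)/(1-r)) * ((v$j-m$j)/(1-r))"
      by (rule mid_real[OF assms])
    then show "((1 / (1 - r^2)) *\<^sub>R (outer v v - r *\<^sub>R (outer m v + outer v m) + outer m m)) $ i $ j =
      (((1+r)/2) *\<^sub>R outer ((1/(1+r)) *\<^sub>R (v+m)) ((1/(1+r)) *\<^sub>R (v+m))
      + (1 - (1+r)/2) *\<^sub>R outer ((1/(1-r)) *\<^sub>R (v-m)) ((1/(1-r)) *\<^sub>R (v-m))) $ i $ j"
      by (simp add: outer_def)
  qed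
  then show ?thesis by (simp add: Mmat_def)
qed

lemma qf_lin:
  fixes \<xi> :: "real^'n"
  shows "\<xi> \<bullet> ((a *\<^sub>R M1 + b *\<^sub>R M2 - N) *v \<xi>) = a * (\<xi> \<bullet> (M1 *v \<xi>)) + b * (\<xi> \<bullet> (M2 *v \<xi>)) - \<xi> \<bullet> (N *v \<xi>)"
  by (simp add: matrix_vector_mult_add_rdistrib matrix_vector_mult_diff_rdistrib scale_mv inner_add_right inner_diff_right)

lemma qf_Zsig:
  fixes \<xi> :: "real^'n"
  shows "\<xi> \<bullet> ((outer A A + PS gs - c *\<^sub>R mat 1) *v \<xi>) = (A \<bullet> \<xi>)^2 + \<xi> \<bullet> (PS gs *v \<xi>) - c * (\<xi> \<bullet> \<xi>)"
  by (simp add: matrix_vector_mult_add_rdistrib matrix_vector_mult_diff_rdistrib scale_mv inner_add_right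
      inner_diff_right quad_outer power2_eq_square)

lemma Zcomb_tuple:
  "\<mu> *\<^sub>R Zp e A gs p1 + (1 - \<mu>) *\<^sub>R Zm e B gs' p2 =
    (\<mu> - (1 - \<mu>), \<mu> *\<^sub>R A + (1 - \<mu>) *\<^sub>R B, \<mu> *\<^sub>R A - (1 - \<mu>) *\<^sub>R B,
     \<mu> *\<^sub>R (outer A A + PS gs - e 1 *\<^sub>R mat 1) + (1 - \<mu>) *\<^sub>R (outer B B + PS gs' - e (-1) *\<^sub>R mat 1),
     \<mu> * p1 + (1 - \<mu>) * p2)"
  by (simp add: Zp_def Zm_def)

lemma U_Rrep:
  fixes z :: "('n::finite) zvec"
  assumes aff: "\<And>r. e r = a * r + b" and e1: "e 1 > 0" and em: "e (-1) > 0" and zU: "z \<in> Uset e"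
  shows "Rrep e z"
proof -
  obtain r v m \<sigma> p where zdef: "z = (r, v, m, \<sigma>, p)" by (cases z) auto
  have sym: "transpose \<sigma> = \<sigma>" and tr: "trace \<sigma> = 0" and r: "-1 < r" "r < 1"
    and Tp: "Tplus z < e 1" and Tm: "Tminus z < e (-1)" and Q: "Qfun z < e r"
    using zU unfolding Uset_def zdef by auto
  define \<mu> where "\<mu> = (1 + r) / 2"
  define A where "A = (1 / (1 + r)) *\<^sub>R (v + m)"
  define B where "B = (1 / (1 - r)) *\<^sub>R (v - m)"
  have mu: "0 < \<mu>" "\<mu> < 1" using r by (simp_all add: \<mu>_def)
  have rp: "1 + r > 0" "1 - r > 0" using r by simp_all
  have MF: "Mmat z = \<mu> *\<^sub>R outer A A + (1 - \<mu>) *\<^sub>R outer B B - \<sigma>"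
    unfolding zdef A_def B_def \<mu>_def by (rule Mmat_formula[OF r])
  have symM: "transpose (Mmat z) = Mmat z"
    unfolding MF by (simp add: transpose_add transpose_diff transpose_scalar transpose_outer sym)
  define P where "P = e r *\<^sub>R mat 1 - Mmat z"
  have symP: "transpose P = P" unfolding P_def by (simp add: transpose_diff transpose_scalar symM)
  have psd: "0 \<le> y \<bullet> (P *v y)" for y
  proof -
    have "y \<bullet> (P *v y) = e r * (y \<bullet> y) - y \<bullet> (Mmat z *v y)"
      by (simp add: P_def matrix_vector_mult_diff_rdistrib scale_mv inner_diff_right)
    moreover have "y \<bullet> (Mmat z *v y) \<le> lambda_max (Mmat z) * (y \<bullet> y)" by (rule lambda_max_props(2)[OF symM])
    moreover have "lambda_max (Mmat z) * (y \<bullet> y) \<le> e r * (y \<bullet> y)"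
      using Q by (simp add: Qfun_def mult_right_mono)
    ultimately show ?thesis by linarith
  qed
  obtain gs0 where gs0: "P = PS gs0" using psd_decomp[OF symP psd] by blast
  have ea: "e 1 = a + b" "e (-1) = b - a" "e r = a * r + b" using aff[of r] aff[of 1] aff[of "-1"] by simp_all
  have er: "e r = \<mu> * e 1 + (1 - \<mu>) * e (-1)"
    unfolding ea \<mu>_def by (simp add: field_simps)
  have nA: "A \<bullet> A < real CARD('n) * e 1"
  proof -
    have "(norm (m + v))^2 / (real CARD('n) * (r + 1)^2) < e 1" using Tp by (simp add: Tplus_def zdef)
    then have "(norm (m + v))^2 < e 1 * (real CARD('n) * (r + 1)^2)" using rp
      by (simp add: pos_divide_less_eq)
    moreover have "(norm (m + v))^2 = (v + m) \<bullet> (v + m)" by (simp add: power2_norm_eq_inner add.commute)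
    moreover have "A \<bullet> A = ((v + m) \<bullet> (v + m)) / (1 + r)^2" by (simp add: A_def power2_eq_square)
    ultimately show ?thesis using rp by (simp add: divide_less_eq add.commute mult_ac)
  qed
  have nB: "B \<bullet> B < real CARD('n) * e (-1)"
  proof -
    have "(norm (m - v))^2 / (real CARD('n) * (r - 1)^2) < e (-1)" using Tm by (simp add: Tminus_def zdef)
    then have "(norm (m - v))^2 < e (-1) * (real CARD('n) * (r - 1)^2)" using rp
      by (simp add: pos_divide_less_eq)
    moreover have "(norm (m - v))^2 = (v - m) \<bullet> (v - m)" by (simp only: norm_minus_commute[of m v] power2_norm_eq_inner)
    moreover have "(r - 1)^2 = (1 - r)^2" by (simp add: power2_eq_square algebra_simps)
    moreover have "B \<bullet> B = ((v - m) \<bullet> (v - m)) / (1 - r)^2" by (simp add: B_def power2_eq_square)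
    ultimately show ?thesis using rp by (simp add: divide_less_eq mult_ac)
  qed
  define \<tau>1 where "\<tau>1 = real CARD('n) * e 1 - A \<bullet> A"
  define \<tau>2 where "\<tau>2 = real CARD('n) * e (-1) - B \<bullet> B"
  have t1: "\<tau>1 > 0" "\<tau>2 > 0" using nA nB by (simp_all add: \<tau>1_def \<tau>2_def)
  define T where "T = SQ gs0"
  have trM: "trace (Mmat z) = \<mu> * (A \<bullet> A) + (1 - \<mu>) * (B \<bullet> B)"
    unfolding MF by (simp add: trace_add trace_sub trace_scale trace_outer tr)
  have TT: "T = \<mu> * \<tau>1 + (1 - \<mu>) * \<tau>2"
  proof -
    have "T = trace P" by (simp add: T_def gs0 trace_PS)
    also have "\<dots> = e r * real CARD('n) - trace (Mmat z)" by (simp add: P_def trace_sub trace_scale trace_I)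
    finally show ?thesis unfolding trM er \<tau>1_def \<tau>2_def by (simp add: algebra_simps)
  qed
  have Tpos: "T > 0" unfolding TT using mu t1 by (simp add: add_pos_pos)
  define gs where "gs = map (\<lambda>g. sqrt (\<tau>1 / T) *\<^sub>R g) gs0"
  define gs' where "gs' = map (\<lambda>g. sqrt (\<tau>2 / T) *\<^sub>R g) gs0"
  have PSg: "PS gs = (\<tau>1 / T) *\<^sub>R P" and SQg: "SQ gs = \<tau>1"
    using t1 Tpos by (simp_all add: gs_def PS_scale SQ_scale gs0 T_def[symmetric])
  have PSg': "PS gs' = (\<tau>2 / T) *\<^sub>R P" and SQg': "SQ gs' = \<tau>2"
    using t1 Tpos by (simp_all add: gs'_def PS_scale SQ_scale gs0 T_def[symmetric])
  define p1 where "p1 = p + (1 - \<mu>) * (e 1 - e (-1))"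
  define p2 where "p2 = p - \<mu> * (e 1 - e (-1))"
  have cA: "\<mu> *\<^sub>R A = (1/2) *\<^sub>R (v + m)" using rp by (simp add: A_def \<mu>_def)
  have cB: "(1 - \<mu>) *\<^sub>R B = (1/2) *\<^sub>R (v - m)"
  proof -
    have "1 - \<mu> = (1 - r) / 2" by (simp add: \<mu>_def field_simps)
    then show ?thesis using rp by (simp add: B_def)
  qed
  have c1: "\<mu> - (1 - \<mu>) = r" by (simp add: \<mu>_def field_simps)
  have c2: "\<mu> *\<^sub>R A + (1 - \<mu>) *\<^sub>R B = v" unfolding cA cB by (simp add: vec_eq_iff field_simps)
  have c3: "\<mu> *\<^sub>R A - (1 - \<mu>) *\<^sub>R B = m" unfolding cA cB by (simp add: vec_eq_iff field_simps)
  have c4: "\<mu> *\<^sub>R (outer A A + PS gs - e 1 *\<^sub>R mat 1) + (1 - \<mu>) *\<^sub>R (outer B B + PS gs' - e (-1) *\<^sub>R mat 1) = \<sigma>"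
  proof -
    have "\<mu> *\<^sub>R (outer A A + PS gs - e 1 *\<^sub>R mat 1) + (1 - \<mu>) *\<^sub>R (outer B B + PS gs' - e (-1) *\<^sub>R mat 1)
      = (\<mu> *\<^sub>R outer A A + (1 - \<mu>) *\<^sub>R outer B B) + (\<mu> * (\<tau>1 / T) + (1 - \<mu>) * (\<tau>2 / T)) *\<^sub>R P
        - (\<mu> * e 1 + (1 - \<mu>) * e (-1)) *\<^sub>R mat 1"
      unfolding PSg PSg' by (simp add: vec_eq_iff algebra_simps)
    also have "\<mu> * (\<tau>1 / T) + (1 - \<mu>) * (\<tau>2 / T) = 1" using TT Tpos by (simp add: field_simps)
    also have "\<mu> * e 1 + (1 - \<mu>) * e (-1) = e r" using er by simp
    finally show ?thesis unfolding P_def MF by (simp add: vec_eq_iff algebra_simps)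
  qed
  have c5: "\<mu> * p1 + (1 - \<mu>) * p2 = p" by (simp add: p1_def p2_def algebra_simps)
  have "z = \<mu> *\<^sub>R Zp e A gs p1 + (1 - \<mu>) *\<^sub>R Zm e B gs' p2"
    unfolding Zcomb_tuple c1 c2 c3 c4 c5 zdef ..
  moreover have "A \<bullet> A + SQ gs = real CARD('n) * e 1" using SQg by (simp add: \<tau>1_def)
  moreover have "B \<bullet> B + SQ gs' = real CARD('n) * e (-1)" using SQg' by (simp add: \<tau>2_def)
  moreover have "p1 - p2 = e 1 - e (-1)" by (simp add: p1_def p2_def algebra_simps)
  ultimately show ?thesis unfolding Rrep_def using mu
    by (intro exI[of _ \<mu>] exI[of _ A] exI[of _ gs] exI[of _ B] exI[of _ gs'] exI[of _ p1] exI[of _ p2]) auto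
qed

lemma persp_aux: "(u::real) \<noteq> 0 \<Longrightarrow> (u/2) * ((1/u) * c * Y)^2 = (c/2) * Y^2 * (c / u)"
  by (simp add: power2_eq_square field_simps)

lemma persp:
  fixes c t Y :: real
  assumes "c \<ge> 0" "t > 0"
  shows "((c+t)/2) * ((1/(c+t)) * c * Y)^2 \<le> (c/2) * Y^2"
proof -
  have ct: "c + t > 0" using assms by simp
  have "((c+t)/2) * ((1/(c+t)) * c * Y)^2 = (c/2) * Y^2 * (c / (c+t))"
    using ct by (intro persp_aux) simp
  also have "\<dots> \<le> (c/2) * Y^2 * 1"
  proof (rule mult_left_mono)
    show "c / (c + t) \<le> 1" using ct assms by simp
    show "0 \<le> c / 2 * Y\<^sup>2" using assms by simp
  qed
  finally show ?thesis by simp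
qed

lemma Tbound:
  fixes c t X N :: real
  assumes "c \<ge> 0" "t > 0" "X \<le> N" "N > 0" "X \<ge> 0"
  shows "c^2 * X / (c + t)^2 < N"
proof -
  have ct: "c + t > 0" using assms by simp
  have "c^2 < (c+t)^2" using assms by (simp add: power_strict_mono)
  then have "c^2 * X \<le> c^2 * N" using assms by (simp add: mult_left_mono)
  also have "\<dots> < (c+t)^2 * N" using \<open>c^2 < (c+t)^2\<close> assms by simp
  finally show ?thesis using ct by (simp add: pos_divide_less_eq mult.commute)
qed



lemma qf_lin2:
  fixes \<xi> :: "real^'n"
  shows "\<xi> \<bullet> ((a *\<^sub>R M1 + b *\<^sub>R M2) *v \<xi>) = a * (\<xi> \<bullet> (M1 *v \<xi>)) + b * (\<xi> \<bullet> (M2 *v \<xi>))"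
  by (simp add: matrix_vector_mult_add_rdistrib scale_mv inner_add_right)

lemma qf_scale:
  fixes \<xi> :: "real^'n"
  shows "\<xi> \<bullet> ((a *\<^sub>R M1) *v \<xi>) = a * (\<xi> \<bullet> (M1 *v \<xi>))"
  by (simp add: scale_mv)

lemma norm_sq_scale: "(norm (c *\<^sub>R (A::real^'n)))^2 = c^2 * (A \<bullet> A)"
proof -
  have "(norm (c *\<^sub>R A))^2 = (c *\<^sub>R A) \<bullet> (c *\<^sub>R A)" by (rule power2_norm_eq_inner)
  also have "\<dots> = c^2 * (A \<bullet> A)" by (simp add: power2_eq_square)
  finally show ?thesis .
qed

lemma inU_point:
  fixes A B :: "real^'n" and \<sigma>z :: "real^'n^'n"
  assumes aff: "\<And>r. e r = a * r + b" and e1: "e 1 > 0" and em: "e (-1) > 0"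
    and mu: "0 \<le> \<mu>" "\<mu> \<le> 1"
    and hA: "A \<bullet> A + SQ gs = real CARD('n) * e 1" and hB: "B \<bullet> B + SQ gs' = real CARD('n) * e (-1)"
    and sz: "\<sigma>z = \<mu> *\<^sub>R (outer A A + PS gs - e 1 *\<^sub>R mat 1) + (1 - \<mu>) *\<^sub>R (outer B B + PS gs' - e (-1) *\<^sub>R mat 1)"
    and t: "0 < t" "t \<le> 1"
  shows "((1 - t) * (\<mu> - (1 - \<mu>)), (1 - t) *\<^sub>R (\<mu> *\<^sub>R A + (1 - \<mu>) *\<^sub>R B),
          (1 - t) *\<^sub>R (\<mu> *\<^sub>R A - (1 - \<mu>) *\<^sub>R B), (1 - t) *\<^sub>R \<sigma>z, pz) \<in> Uset e"
proof -
  define s where "s = 1 - t"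
  have s: "0 \<le> s" "s < 1" using t by (simp_all add: s_def)
  define rx where "rx = s * (\<mu> - (1 - \<mu>))"
  define vx where "vx = s *\<^sub>R (\<mu> *\<^sub>R A + (1 - \<mu>) *\<^sub>R B)"
  define mx where "mx = s *\<^sub>R (\<mu> *\<^sub>R A - (1 - \<mu>) *\<^sub>R B)"
  define c where "c = 2 * s * \<mu>"
  define c' where "c' = 2 * s * (1 - \<mu>)"
  have c0: "c \<ge> 0" "c' \<ge> 0" using s mu by (simp_all add: c_def c'_def)
  have n0: "real CARD('n) > 0" by simp
  have eb: "e 1 = a + b" "e (-1) = b - a" using aff[of 1] aff[of "-1"] by simp_all
  have bpos: "b > 0" using e1 em eb by simp
  have r1: "1 + rx = c + t" by (simp add: rx_def c_def s_def algebra_simps)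
  have r2: "1 - rx = c' + t" by (simp add: rx_def c'_def s_def algebra_simps)
  have rxb: "-1 < rx" "rx < 1" using r1 r2 c0 t by linarith+
  have vpm: "vx + mx = c *\<^sub>R A" by (simp add: vx_def mx_def c_def vec_eq_iff algebra_simps)
  have vmm: "vx - mx = c' *\<^sub>R B" by (simp add: vx_def mx_def c'_def vec_eq_iff algebra_simps)
  have symz: "transpose \<sigma>z = \<sigma>z"
    by (simp add: sz transpose_add transpose_diff transpose_scalar transpose_outer transpose_PS)
  have trz: "trace \<sigma>z = 0"
  proof -
    have "trace \<sigma>z = \<mu> * (A \<bullet> A + SQ gs - e 1 * real CARD('n)) + (1 - \<mu>) * (B \<bullet> B + SQ gs' - e (-1) * real CARD('n))"
      by (simp add: sz trace_add trace_sub trace_scale trace_outer trace_PS trace_I)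
    moreover have "A \<bullet> A + SQ gs - e 1 * real CARD('n) = 0" using hA by simp
    moreover have "B \<bullet> B + SQ gs' - e (-1) * real CARD('n) = 0" using hB by simp
    ultimately show ?thesis by simp
  qed
  have nA: "A \<bullet> A \<le> real CARD('n) * e 1" using hA SQ_nonneg[of gs] by linarith
  have nB: "B \<bullet> B \<le> real CARD('n) * e (-1)" using hB SQ_nonneg[of gs'] by linarith
  have Tp: "Tplus (rx, vx, mx, s *\<^sub>R \<sigma>z, pz) < e 1"
  proof -
    have r1': "rx + 1 = c + t" using r1 by simp
    have vpm': "mx + vx = c *\<^sub>R A" using vpm by (simp add: add.commute)
    have "Tplus (rx, vx, mx, s *\<^sub>R \<sigma>z, pz) = (norm (mx + vx))^2 / (real CARD('n) * (rx + 1)^2)"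
      by (simp add: Tplus_def)
    also have "\<dots> = (c^2 * (A \<bullet> A)) / (real CARD('n) * (c + t)^2)"
      by (simp only: vpm' r1' norm_sq_scale)
    also have "\<dots> = (c^2 * (A \<bullet> A) / (c + t)^2) / real CARD('n)"
      by (simp add: divide_divide_eq_left mult.commute)
    also have "\<dots> < e 1"
    proof -
      have H: "c^2 * (A \<bullet> A) / (c + t)^2 < real CARD('n) * e 1"
        by (rule Tbound[OF c0(1) t(1) nA]) (use n0 e1 in simp_all)
      show ?thesis using H n0 by (metis pos_divide_less_eq mult.commute)
    qed
    finally show ?thesis .
  qed
  have Tm: "Tminus (rx, vx, mx, s *\<^sub>R \<sigma>z, pz) < e (-1)"
  proof -
    have mv: "mx - vx = - (c' *\<^sub>R B)" using vmm by (simp add: algebra_simps)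
    have "rx - 1 = -(c' + t)" using r2 by linarith
    then have rr: "(rx - 1)^2 = (c' + t)^2" by (simp only: power2_minus)
    have "Tminus (rx, vx, mx, s *\<^sub>R \<sigma>z, pz) = (norm (mx - vx))^2 / (real CARD('n) * (rx - 1)^2)"
      by (simp add: Tminus_def)
    also have "\<dots> = (c'^2 * (B \<bullet> B)) / (real CARD('n) * (c' + t)^2)"
      by (simp only: mv norm_minus_cancel rr norm_sq_scale)
    also have "\<dots> = (c'^2 * (B \<bullet> B) / (c' + t)^2) / real CARD('n)"
      by (simp add: divide_divide_eq_left mult.commute)
    also have "\<dots> < e (-1)"
    proof -
      have H: "c'^2 * (B \<bullet> B) / (c' + t)^2 < real CARD('n) * e (-1)"
        by (rule Tbound[OF c0(2) t(1) nB]) (use n0 em in simp_all)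
      show ?thesis using H n0 by (metis pos_divide_less_eq mult.commute)
    qed
    finally show ?thesis .
  qed
  have hm: "1 - (c + t) / 2 = (c' + t) / 2" using r1 r2 by (simp add: field_simps)
  define M where "M = Mmat (rx, vx, mx, s *\<^sub>R \<sigma>z, pz)"
  have MF: "M = ((c + t) / 2) *\<^sub>R outer ((1 / (c + t)) *\<^sub>R (c *\<^sub>R A)) ((1 / (c + t)) *\<^sub>R (c *\<^sub>R A))
      + ((c' + t) / 2) *\<^sub>R outer ((1 / (c' + t)) *\<^sub>R (c' *\<^sub>R B)) ((1 / (c' + t)) *\<^sub>R (c' *\<^sub>R B)) - s *\<^sub>R \<sigma>z"
    unfolding M_def Mmat_formula[OF rxb] r1 hm r2 vpm vmm ..
  have symM: "transpose M = M"
    unfolding MF by (simp add: transpose_add transpose_diff transpose_scalar transpose_outer symz)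
  have Q: "Qfun (rx, vx, mx, s *\<^sub>R \<sigma>z, pz) < e rx"
    unfolding Qfun_def M_def[symmetric]
  proof (rule lambda_max_less[OF symM])
    fix \<xi> :: "real^'n" assume "\<xi> \<noteq> 0"
    then have xx: "\<xi> \<bullet> \<xi> > 0" by simp
    define X where "X = A \<bullet> \<xi>"
    define Y where "Y = B \<bullet> \<xi>"
    define PA where "PA = \<xi> \<bullet> (PS gs *v \<xi>)"
    define PB where "PB = \<xi> \<bullet> (PS gs' *v \<xi>)"
    have PA: "PA \<ge> 0" "PB \<ge> 0" by (simp_all add: PA_def PB_def quad_PS)
    have q1: "\<xi> \<bullet> (M *v \<xi>) = ((c + t) / 2) * ((1 / (c + t)) * c * X)^2 + ((c' + t) / 2) * ((1 / (c' + t)) * c' * Y)^2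
        - s * (\<mu> * (X^2 + PA - e 1 * (\<xi> \<bullet> \<xi>)) + (1 - \<mu>) * (Y^2 + PB - e (-1) * (\<xi> \<bullet> \<xi>)))"
      unfolding MF qf_lin qf_scale sz qf_lin2 qf_Zsig
      by (simp add: quad_outer X_def Y_def PA_def PB_def power2_eq_square inner_commute[of \<xi> A] inner_commute[of \<xi> B])
    have b1: "((c + t) / 2) * ((1 / (c + t)) * c * X)^2 \<le> (c / 2) * X^2" by (rule persp[OF c0(1) t(1)])
    have b2: "((c' + t) / 2) * ((1 / (c' + t)) * c' * Y)^2 \<le> (c' / 2) * Y^2" by (rule persp[OF c0(2) t(1)])
    have p1: "s * (\<mu> * PA) \<ge> 0" "s * ((1 - \<mu>) * PB) \<ge> 0" using s mu PA by simp_all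
    have eq: "s * (\<mu> * (X^2 + PA - e 1 * (\<xi> \<bullet> \<xi>)) + (1 - \<mu>) * (Y^2 + PB - e (-1) * (\<xi> \<bullet> \<xi>)))
        = (c / 2) * X^2 + (c' / 2) * Y^2 + s * (\<mu> * PA) + s * ((1 - \<mu>) * PB) - s * (\<mu> * e 1 + (1 - \<mu>) * e (-1)) * (\<xi> \<bullet> \<xi>)"
    proof -
      have "c / 2 = s * \<mu>" "c' / 2 = s * (1 - \<mu>)" by (simp_all add: c_def c'_def)
      then show ?thesis by (simp only:) (simp add: algebra_simps)
    qed
    have erx: "s * (\<mu> * e 1 + (1 - \<mu>) * e (-1)) = e rx - t * b"
      using aff[of rx] by (simp add: eb rx_def s_def algebra_simps)
    have erx2: "s * (\<mu> * e 1 + (1 - \<mu>) * e (-1)) * (\<xi> \<bullet> \<xi>) = e rx * (\<xi> \<bullet> \<xi>) - t * b * (\<xi> \<bullet> \<xi>)"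
      unfolding erx by (simp add: algebra_simps)
    have "t * b * (\<xi> \<bullet> \<xi>) > 0" using t bpos xx by simp
    then show "\<xi> \<bullet> (M *v \<xi>) < e rx * (\<xi> \<bullet> \<xi>)"
      using q1 b1 b2 p1 eq erx2 by linarith
  qed
  have Z: "(rx, vx, mx, s *\<^sub>R \<sigma>z, pz) \<in> Zspace"
    using symz trz by (simp add: transpose_scalar trace_scale)
  show ?thesis
    unfolding s_def[symmetric] rx_def[symmetric] vx_def[symmetric] mx_def[symmetric] Uset_def
    using Z rxb Tp Tm Q by simp
qed



definition ep :: "('n::finite) zvec" where "ep = (0, 0, 0, 0, 1)"

definition Kfun :: "(real \<Rightarrow> real) \<Rightarrow> real \<Rightarrow> real^'n \<Rightarrow> ('n::finite) zvec" where
  "Kfun e r v = (r, v, r *\<^sub>R v, outer v v - e r *\<^sub>R mat 1, 0)"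

lemma Kfun_cont: "continuous_on S (Kfun e r :: real^'n \<Rightarrow> ('n::finite) zvec)"
  unfolding Kfun_def outer_def
  by (intro continuous_intros)

definition K0 :: "(real \<Rightarrow> real) \<Rightarrow> ('n::finite) zvec set" where
  "K0 e = Kfun e 1 ` sphere 0 (sqrt (real CARD('n) * e 1)) \<union> Kfun e (-1) ` sphere 0 (sqrt (real CARD('n) * e (-1)))"

lemma K0_compact: "compact (K0 e)"
  unfolding K0_def by (intro compact_Un compact_continuous_image Kfun_cont compact_sphere)

lemma Kfun_K:
  assumes r: "r = 1 \<or> r = -1" and ge: "e r \<ge> 0" and v: "norm v = sqrt (real CARD('n) * e r)"
  shows "Kfun e r v + q *\<^sub>R ep \<in> (Kset e :: ('n::finite) zvec set)"
proof -
  have ge': "real CARD('n) * e r \<ge> 0" using ge by simp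
  have vv: "v \<bullet> v = real CARD('n) * e r"
    using v ge' by (metis power2_norm_eq_inner real_sqrt_pow2)
  have "trace (outer v v - e r *\<^sub>R mat 1) = 0"
    using vv by (simp add: trace_sub trace_outer trace_scale trace_I mult.commute)
  moreover have "transpose (outer v v - e r *\<^sub>R mat 1) = outer v v - e r *\<^sub>R mat 1"
    by (simp add: transpose_diff transpose_outer transpose_scalar)
  ultimately show ?thesis using r unfolding Kset_def Kfun_def ep_def by auto
qed

lemma K0_K:
  assumes "e 1 \<ge> 0" "e (-1) \<ge> 0" "k \<in> K0 e"
  shows "k + q *\<^sub>R ep \<in> (Kset e :: ('n::finite) zvec set)"
proof -
  from assms(3) have "k \<in> Kfun e 1 ` sphere 0 (sqrt (real CARD('n) * e 1)) \<or>
     k \<in> Kfun e (-1) ` sphere 0 (sqrt (real CARD('n) * e (-1)))" unfolding K0_def by simp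
  then show ?thesis
  proof
    assume "k \<in> Kfun e 1 ` sphere 0 (sqrt (real CARD('n) * e 1))"
    then obtain v where "norm v = sqrt (real CARD('n) * e 1)" "k = Kfun e 1 v" by auto
    then show ?thesis using Kfun_K[of 1 e v q] assms(1) by simp
  next
    assume "k \<in> Kfun e (-1) ` sphere 0 (sqrt (real CARD('n) * e (-1)))"
    then obtain v where "norm v = sqrt (real CARD('n) * e (-1))" "k = Kfun e (-1) v" by auto
    then show ?thesis using Kfun_K[of "-1" e v q] assms(2) by simp
  qed
qed

lemma K_K0:
  assumes "k \<in> (Kset e :: ('n::finite) zvec set)"
  shows "\<exists>k0 q. k0 \<in> K0 e \<and> k = k0 + q *\<^sub>R ep"
proof -
  from K_char[OF assms] have kc: "(fst k = 1 \<or> fst k = -1)" "fst (snd k) \<bullet> fst (snd k) = real CARD('n) * e (fst k)"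
    "k = (fst k, fst (snd k), fst k *\<^sub>R fst (snd k), outer (fst (snd k)) (fst (snd k)) - e (fst k) *\<^sub>R mat 1,
         snd (snd (snd (snd k))))" by blast+
  define v where "v = fst (snd k)"
  have nv: "norm v = sqrt (real CARD('n) * e (fst k))" using kc(2) by (simp add: v_def norm_eq_sqrt_inner)
  have "Kfun e (fst k) v \<in> K0 e"
  proof (cases "fst k = 1")
    case True then show ?thesis using nv unfolding K0_def by simp
  next
    case False then have "fst k = -1" using kc(1) by simp
    then show ?thesis using nv unfolding K0_def by simp
  qed
  moreover have "k = Kfun e (fst k) v + snd (snd (snd (snd k))) *\<^sub>R ep"
    by (subst kc(3)) (simp add: Kfun_def ep_def v_def)
  ultimately show ?thesis by blast
qed

lemma closed_convK:
  assumes "e 1 \<ge> 0" "e (-1) \<ge> 0"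
  shows "closed (convex hull (Kset e :: ('n::finite) zvec set))"
proof -
  define L where "L = span {ep :: 'n zvec}"
  have Lc: "closed L" unfolding L_def by (rule closed_subspace[OF subspace_span])
  have Lr: "y \<in> L \<longleftrightarrow> (\<exists>q. y = q *\<^sub>R ep)" for y unfolding L_def span_singleton by auto
  define C where "C = {x + q *\<^sub>R ep | x q. x \<in> convex hull (K0 e :: 'n zvec set)}"
  have CU: "C = (\<Union>x\<in>convex hull (K0 e). \<Union>y\<in>L. {x + y})" 
  proof (intro set_eqI iffI)
    fix w :: "'n zvec" assume "w \<in> C"
    then obtain x q where "x \<in> convex hull (K0 e)" "w = x + q *\<^sub>R ep" unfolding C_def by blast
    moreover have "q *\<^sub>R ep \<in> L" using Lr by blast
    ultimately show "w \<in> (\<Union>x\<in>convex hull (K0 e). \<Union>y\<in>L. {x + y})" by blast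
  next
    fix w :: "'n zvec" assume "w \<in> (\<Union>x\<in>convex hull (K0 e). \<Union>y\<in>L. {x + y})"
    then obtain x y where xy: "x \<in> convex hull (K0 e)" "y \<in> L" "w = x + y" by blast
    then obtain q where "y = q *\<^sub>R ep" using Lr by blast
    then show "w \<in> C" unfolding C_def using xy by blast
  qed
  have Cc: "closed C" unfolding CU
    by (rule compact_closed_sums[OF compact_convex_hull[OF K0_compact] Lc])
  have "convex hull (Kset e) = C"
  proof
    show "convex hull (Kset e) \<subseteq> C"
    proof (rule hull_minimal)
      show "Kset e \<subseteq> C"
      proof
        fix k :: "'n zvec" assume "k \<in> Kset e"
        then obtain k0 q where "k0 \<in> K0 e" "k = k0 + q *\<^sub>R ep" using K_K0 by blast
        then show "k \<in> C" unfolding C_def using hull_inc[of k0 "K0 e"] by blast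
      qed
      show "convex C"
      proof (rule convexI)
        fix z1 z2 :: "'n zvec" and u v :: real
        assume z1: "z1 \<in> C" and z2: "z2 \<in> C" and uv: "0 \<le> u" "0 \<le> v" "u + v = 1"
        obtain x1 q1 where x1: "x1 \<in> convex hull K0 e" "z1 = x1 + q1 *\<^sub>R ep" using z1 unfolding C_def by blast
        obtain x2 q2 where x2: "x2 \<in> convex hull K0 e" "z2 = x2 + q2 *\<^sub>R ep" using z2 unfolding C_def by blast
        have "u *\<^sub>R x1 + v *\<^sub>R x2 \<in> convex hull K0 e"
          using convexD[OF convex_convex_hull x1(1) x2(1) uv(1,2,3)] .
        moreover have "u *\<^sub>R z1 + v *\<^sub>R z2 = (u *\<^sub>R x1 + v *\<^sub>R x2) + (u * q1 + v * q2) *\<^sub>R ep"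
          unfolding x1(2) x2(2) by (simp add: algebra_simps)
        ultimately show "u *\<^sub>R z1 + v *\<^sub>R z2 \<in> C" unfolding C_def by blast
      qed
    qed
    show "C \<subseteq> convex hull (Kset e)"
    proof
      fix z :: "'n zvec" assume "z \<in> C"
      then obtain x q where x: "x \<in> convex hull K0 e" and z: "z = x + q *\<^sub>R ep" unfolding C_def by blast
      have "(\<lambda>y. q *\<^sub>R (ep :: 'n zvec) + y) ` K0 e \<subseteq> Kset e"
      proof
        fix w :: "'n zvec" assume "w \<in> (\<lambda>y. q *\<^sub>R ep + y) ` K0 e"
        then obtain y where y: "y \<in> K0 e" "w = q *\<^sub>R ep + y" by blast
        show "w \<in> Kset e" using K0_K[OF assms y(1), of q] y(2) by (simp add: add.commute)
      qed
      then have "convex hull ((\<lambda>y. q *\<^sub>R (ep :: 'n zvec) + y) ` K0 e) \<subseteq> convex hull (Kset e)" by (rule hull_mono)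
      moreover have "z \<in> (\<lambda>y. q *\<^sub>R ep + y) ` (convex hull (K0 e))" using x z by (simp add: add.commute)
      ultimately show "z \<in> convex hull (Kset e)" unfolding convex_hull_translation by blast
    qed
  qed
  then show ?thesis using Cc by simp
qed



lemma Rrep_closure:
  fixes z :: "('n::finite) zvec"
  assumes aff: "\<And>r. e r = a * r + b" and e1: "e 1 > 0" and em: "e (-1) > 0" and R: "Rrep e z"
  shows "z \<in> closure (Uset e)"
proof -
  obtain \<mu> A gs B gs' p1 p2 where mu: "0 \<le> \<mu>" "\<mu> \<le> 1"
    and hA: "A \<bullet> A + SQ gs = real CARD('n) * e 1" and hB: "B \<bullet> B + SQ gs' = real CARD('n) * e (-1)"
    and z: "z = \<mu> *\<^sub>R Zp e A gs p1 + (1 - \<mu>) *\<^sub>R Zm e B gs' p2"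
    using R unfolding Rrep_def by blast
  define \<sigma>z where "\<sigma>z = \<mu> *\<^sub>R (outer A A + PS gs - e 1 *\<^sub>R mat 1) + (1 - \<mu>) *\<^sub>R (outer B B + PS gs' - e (-1) *\<^sub>R mat 1)"
  define pz where "pz = \<mu> * p1 + (1 - \<mu>) * p2"
  have zt: "z = (\<mu> - (1 - \<mu>), \<mu> *\<^sub>R A + (1 - \<mu>) *\<^sub>R B, \<mu> *\<^sub>R A - (1 - \<mu>) *\<^sub>R B, \<sigma>z, pz)"
    unfolding z Zcomb_tuple \<sigma>z_def pz_def ..
  define z0 :: "'n zvec" where "z0 = (0, 0, 0, 0, pz)"
  define x where "x k = z + inverse (real (Suc k)) *\<^sub>R (z0 - z)" for k
  have xin: "x k \<in> Uset e" for k
  proof -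
    define t where "t = inverse (real (Suc k))"
    have t: "0 < t" "t \<le> 1" by (simp_all add: t_def inverse_le_1_iff)
    have "x k = ((1 - t) * (\<mu> - (1 - \<mu>)), (1 - t) *\<^sub>R (\<mu> *\<^sub>R A + (1 - \<mu>) *\<^sub>R B),
          (1 - t) *\<^sub>R (\<mu> *\<^sub>R A - (1 - \<mu>) *\<^sub>R B), (1 - t) *\<^sub>R \<sigma>z, pz)"
      unfolding x_def t_def[symmetric] z0_def zt by (simp add: algebra_simps)
    also have "\<dots> \<in> Uset e"
      by (rule inU_point[OF aff e1 em mu hA hB \<sigma>z_def t])
    finally show ?thesis .
  qed
  have "x \<longlonglongrightarrow> z + 0 *\<^sub>R (z0 - z)"
    unfolding x_def by (intro tendsto_intros LIMSEQ_inverse_real_of_nat)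
  then have "x \<longlonglongrightarrow> z" by simp
  then show ?thesis unfolding closure_sequential using xin by blast
qed

lemma Zspace_convex: "convex (Zspace :: ('n::finite) zvec set)"
  by (rule convexI) (rule Zspace_lin)

lemma Kset_Zspace: "Kset e \<subseteq> Zspace"
  unfolding Kset_def by blast

lemma hull_Zspace: "convex hull (Kset e :: ('n::finite) zvec set) \<subseteq> Zspace"
  by (rule hull_minimal[where S=convex]) (rule Kset_Zspace, rule Zspace_convex)

lemma lambda_hull_sub:
  assumes "e 1 \<ge> 0" "e (-1) \<ge> 0"
  shows "lambda_hull (Kset e :: ('n::finite) zvec set) \<subseteq> convex hull (Kset e)"
proof
  fix z :: "'n zvec" assume zl: "z \<in> lambda_hull (Kset e)"
  show "z \<in> convex hull (Kset e)"
  proof (rule ccontr)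
    assume "z \<notin> convex hull (Kset e)"
    then obtain w c where wz: "inner w z < c" and wK: "\<forall>x\<in>convex hull (Kset e). c < inner w x"
      using separating_hyperplane_closed_point[OF convex_convex_hull closed_convK[OF assms]] by blast
    define h where "h x = - inner w x" for x :: "'n zvec"
    have lc: "lambda_convex h"
      unfolding lambda_convex_def
    proof (intro ballI)
      fix z0 zb :: "'n zvec"
      show "convex_on UNIV (\<lambda>s. h (z0 + s *\<^sub>R zb))"
        unfolding convex_on_def h_def
        by (simp add: inner_add_right algebra_simps) (auto simp: distrib_right[symmetric])
    qed
    have "ereal (h z) \<le> (SUP k\<in>Kset e. ereal (h k))" using zl lc unfolding lambda_hull_def by blast
    also have "\<dots> \<le> ereal (- c)"
    proof (rule SUP_least)
      fix k :: "'n zvec" assume "k \<in> Kset e"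
      then have "c < inner w k" using wK hull_inc[of k "Kset e"] by blast
      then show "ereal (h k) \<le> ereal (- c)" by (simp add: h_def)
    qed
    finally have "- inner w z \<le> - c" by (simp add: h_def)
    then show False using wz by simp
  qed
qed

theorem proposition3p6:
  fixes e :: "real \<Rightarrow> real"
  assumes "CARD('n::finite) \<ge> 2"
    and "\<exists>a b. \<forall>r. e r = a * r + b"
    and "e 1 > 0" and "e (-1) > 0"
  shows "lambda_hull (Kset e :: 'n zvec set) = convex hull (Kset e)
       \<and> convex hull (Kset e :: 'n zvec set) = closure (Uset e)"
proof -
  obtain a b where aff: "\<And>r. e r = a * r + b" using assms(2) by blast
  have e1: "e 1 \<ge> 0" "e (-1) \<ge> 0" using assms(3,4) by simp_all
  have H1: "lambda_hull (Kset e :: 'n zvec set) = convex hull (Kset e)"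
  proof
    show "lambda_hull (Kset e :: 'n zvec set) \<subseteq> convex hull (Kset e)" by (rule lambda_hull_sub[OF e1])
    show "convex hull (Kset e) \<subseteq> lambda_hull (Kset e :: 'n zvec set)"
    proof
      fix z :: "'n zvec" assume z: "z \<in> convex hull (Kset e)"
      have R: "Rrep e z" by (rule conv_Rrep[OF z e1])
      have "z \<in> Zspace" using z hull_Zspace by blast
      moreover have "\<forall>h. lambda_convex h \<longrightarrow> ereal (h z) \<le> (SUP k\<in>Kset e. ereal (h k))"
        using Rrep_lambda[OF assms(1) _ R] by blast
      ultimately show "z \<in> lambda_hull (Kset e)" unfolding lambda_hull_def by blast
    qed
  qed
  have H2: "convex hull (Kset e :: 'n zvec set) = closure (Uset e)"
  proof
    show "convex hull (Kset e :: 'n zvec set) \<subseteq> closure (Uset e)"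
    proof
      fix z :: "'n zvec" assume z: "z \<in> convex hull (Kset e)"
      show "z \<in> closure (Uset e)" by (rule Rrep_closure[OF aff assms(3,4) conv_Rrep[OF z e1]])
    qed
    show "closure (Uset e) \<subseteq> convex hull (Kset e :: 'n zvec set)"
    proof (rule closure_minimal)
      show "Uset e \<subseteq> convex hull (Kset e :: 'n zvec set)"
      proof
        fix z :: "'n zvec" assume "z \<in> Uset e"
        then have "Rrep e z" by (rule U_Rrep[OF aff assms(3,4)])
        then show "z \<in> convex hull (Kset e)" by (rule Rrep_hull[OF assms(1)])
      qed
      show "closed (convex hull (Kset e :: 'n zvec set))" by (rule closed_convK[OF e1])
    qed
  qed
  show ?thesis using H1 H2 by blast
qed

end
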